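(* Let $a\in(0,1)$. As $n\to\infty$, $\mu\to0$ with $n\mu\to\theta\in[0,\infty)$ and $|\mathcal{S}|\mu\to\eta\in[0,\infty)$, $$\mathbb{E}\Big[\sum_{i\in\mathcal{S}}\delta_{n^{-1}B_i^{n,\mu}}\big((a,1)\big)\Big]\longrightarrow 2\eta(a^{-1}-1).$$
   Context: Basic model. Let $\mathcal{N}=\{A,C,G,T\}$, $\mathcal{S}$ a finite nonempty set of sites. One initial cell with genome $u=(u_i)_{i\in\mathcal{S}}\in\mathcal{N}^{\mathcal{S}}$; each cell lives an independent Exp(1) time and is then replaced by two daughters. At a division of a cell with genome $v$, conditionally on $v$ the daughters' entries $V_i^{(r)}$ ($i\in\mathcal{S}$, $r\in\{1,2\}$) are independent with $\mathbb{P}[V_i^{(r)}=\psi\mid v]=\mu/3$ for $\psi\neq v_i$ and $1-\mu$ for $\psi=v_i$; different divisions mutate independently. $\sigma_n$ = first time there are $n$ alive cells; $B_i^{n,\mu}$ = number of cells alive at $\sigma_n$ whose nucleotide at site $i$ differs from $u_i$. The limit is along arbitrary sequences of $(n,\mu,\mathcal{S})$ with the stated asymptotics. *)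

theory Defs
  imports "HOL-Probability.Probability"
begin

datatype nuc = A | C | G | T

definition mutate :: "real \<Rightarrow> nuc \<Rightarrow> nuc pmf" where
  "mutate mu x = bind_pmf (bernoulli_pmf mu)
     (\<lambda>b. if b then pmf_of_set ({A, C, G, T} - {x}) else return_pmf x)"

text \<open>Genome of a daughter of a cell with genome v: independent mutation at each site of S
  (entries outside S are irrelevant and set to A).\<close>
definition daughter :: "real \<Rightarrow> 'a set \<Rightarrow> ('a \<Rightarrow> nuc) \<Rightarrow> ('a \<Rightarrow> nuc) pmf" where
  "daughter mu S v = Pi_pmf S A (\<lambda>i. mutate mu (v i))"

text \<open>One division in the embedded jump chain of the Yule process: a uniformly chosen alive
  cell is replaced by two independently mutated daughters.\<close>
definition division :: "real \<Rightarrow> 'a set \<Rightarrow> ('a \<Rightarrow> nuc) list \<Rightarrow> ('a \<Rightarrow> nuc) list pmf" where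
  "division mu S cs =
     do { j \<leftarrow> pmf_of_set {..<length cs};
          d1 \<leftarrow> daughter mu S (cs ! j);
          d2 \<leftarrow> daughter mu S (cs ! j);
          return_pmf (take j cs @ [d1, d2] @ drop (Suc j) cs) }"

text \<open>Genomes of the n cells alive at sigma_n (the (n-1)-th division), starting from one cell
  with genome u.\<close>
definition population :: "nat \<Rightarrow> real \<Rightarrow> 'a set \<Rightarrow> ('a \<Rightarrow> nuc) \<Rightarrow> ('a \<Rightarrow> nuc) list pmf" where
  "population n mu S u = ((\<lambda>p. bind_pmf p (division mu S)) ^^ (n - 1)) (return_pmf [u])"

definition Bcount :: "('a \<Rightarrow> nuc) \<Rightarrow> ('a \<Rightarrow> nuc) list \<Rightarrow> 'a \<Rightarrow> nat" where
  "Bcount u cs i = length (filter (\<lambda>c. c i \<noteq> u i) cs)"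

definition expected_sites :: "nat \<Rightarrow> real \<Rightarrow> 'a set \<Rightarrow> ('a \<Rightarrow> nuc) \<Rightarrow> real \<Rightarrow> real" where
  "expected_sites n mu S u a = measure_pmf.expectation (population n mu S u)
     (\<lambda>cs. \<Sum>i\<in>S. indicator {a<..<1} (real (Bcount u cs i) / real n))"

end

theory Submission
  imports Defs "HOL-Real_Asymp.Real_Asymp"
begin

definition kern :: "real \<Rightarrow> nat \<Rightarrow> nat \<Rightarrow> nat pmf" where
  "kern mu m b = bind_pmf (bernoulli_pmf (real b / real m)) (\<lambda>mt.
     bind_pmf (bernoulli_pmf (if mt then 1 - mu/3 else mu)) (\<lambda>x1.
     bind_pmf (bernoulli_pmf (if mt then 1 - mu/3 else mu)) (\<lambda>x2.
     return_pmf (b - of_bool mt + of_bool x1 + of_bool x2))))"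

fun ch :: "real \<Rightarrow> nat \<Rightarrow> nat pmf" where
  "ch mu 0 = return_pmf 0"
| "ch mu (Suc m) = (if m = 0 then return_pmf 0 else bind_pmf (ch mu m) (kern mu m))"

lemma expectation_bind_finite:
  fixes h :: "'b \<Rightarrow> real"
  assumes "finite (set_pmf p)" "\<And>x. x \<in> set_pmf p \<Longrightarrow> finite (set_pmf (f x))"
  shows "measure_pmf.expectation (bind_pmf p f) h =
         measure_pmf.expectation p (\<lambda>x. measure_pmf.expectation (f x) h)"
proof -
  have "measure_pmf.expectation (bind_pmf p f) h =
        (\<Sum>a\<in>set_pmf p. pmf p a *\<^sub>R measure_pmf.expectation (f a) h)"
    using assms by (intro pmf_expectation_bind) auto
  also have "\<dots> = measure_pmf.expectation p (\<lambda>x. measure_pmf.expectation (f x) h)"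
    by (subst integral_measure_pmf[of "set_pmf p"]) (auto simp: assms)
  finally show ?thesis .
qed

lemma finite_set_bernoulli [simp]: "finite (set_pmf (bernoulli_pmf p))"
  by (rule finite_subset[of _ UNIV]) auto

lemma finite_set_kern [simp]: "finite (set_pmf (kern mu m b))"
  unfolding kern_def by simp

lemma E_kern:
  fixes f :: "nat \<Rightarrow> real"
  assumes "b \<le> m" "0 < m" "0 \<le> mu" "mu \<le> 1"
  shows "measure_pmf.expectation (kern mu m b) f =
     (real b / real m) * ((1 - mu/3)^2 * f (b - 1 + 2) + 2 * (mu/3) * (1 - mu/3) * f (b - 1 + 1)
         + (mu/3)^2 * f (b - 1))
   + (1 - real b / real m) * ((1 - mu)^2 * f b + 2 * mu * (1 - mu) * f (b + 1) + mu^2 * f (b + 2))"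
proof -
  have p: "0 \<le> real b / real m" "real b / real m \<le> 1" using assms by auto
  show ?thesis
    unfolding kern_def
    using assms p
    apply (simp add: expectation_bind_finite integral_bernoulli_pmf)
    apply (simp add: field_simps power2_eq_square)
    done
qed

lemma poch_diff: "pochhammer (x+1) (Suc k) = pochhammer (x::real) (Suc k) + real (Suc k) * pochhammer (x+1) k"
proof -
  have a: "pochhammer (x+1) (Suc k) = (x + 1 + real k) * pochhammer (x+1) k"
    by (simp add: pochhammer_rec')
  have b: "pochhammer x (Suc k) = x * pochhammer (x+1) k"
    by (simp add: pochhammer_rec)
  show ?thesis unfolding a b by (simp add: algebra_simps)
qed

lemma poch_nonneg: "0 \<le> (x::real) \<Longrightarrow> 0 \<le> pochhammer x k"
  by (induction k) (auto simp: pochhammer_rec')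

lemma poch_mono: "0 \<le> (x::real) \<Longrightarrow> x \<le> y \<Longrightarrow> pochhammer x k \<le> pochhammer y k"
proof (induction k)
  case (Suc k)
  have "pochhammer x (Suc k) = (x + k) * pochhammer x k" by (simp add: pochhammer_rec')
  also have "\<dots> \<le> (y + k) * pochhammer y k"
    using Suc poch_nonneg[of x k] by (intro mult_mono) auto
  also have "\<dots> = pochhammer y (Suc k)" by (simp add: pochhammer_rec')
  finally show ?case .
qed simp

lemma poch_shift_le: "1 \<le> (x::real) \<Longrightarrow> pochhammer (x+1) k \<le> real (Suc k) * pochhammer x k"
proof -
  assume x: "1 \<le> x"
  have e: "pochhammer (x+1) k * x = pochhammer x k * (x + k)"
    by (metis mult.commute pochhammer_rec pochhammer_rec')
  have "pochhammer (x+1) k * x \<le> (real (Suc k) * pochhammer x k) * x"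
  proof -
    have "real k * 1 \<le> real k * x" using x by (intro mult_left_mono) auto
    hence "x + real k \<le> real (Suc k) * x" by (simp add: algebra_simps)
    hence "pochhammer x k * (x + k) \<le> pochhammer x k * (real (Suc k) * x)"
      using x poch_nonneg[of x k] by (intro mult_left_mono) auto
    thus ?thesis unfolding e by (simp add: algebra_simps)
  qed
  thus ?thesis using x by simp
qed

lemma poch_fact_le: "1 \<le> (x::real) \<Longrightarrow> fact k \<le> pochhammer x k"
  using poch_mono[of 1 x k] by (simp add: pochhammer_fact)

lemma poch_pow: "0 \<le> (x::real) \<Longrightarrow> 0 \<le> pochhammer x r - x ^ r \<and> pochhammer x r - x ^ r \<le> real r ^ 2 * pochhammer x (r - 1)"
proof (induction r)
  case 0 then show ?case by simp
next
  case (Suc r)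
  have e: "pochhammer x (Suc r) = (x + r) * pochhammer x r" by (simp add: pochhammer_rec')
  have ih1: "0 \<le> pochhammer x r - x ^ r" and ih2: "pochhammer x r - x ^ r \<le> real r ^ 2 * pochhammer x (r - 1)"
    using Suc by auto
  have xp: "x * (real r ^ 2 * pochhammer x (r - 1)) \<le> real r ^ 2 * pochhammer x r"
  proof (cases r)
    case (Suc r') 
    have "pochhammer x r = (x + r') * pochhammer x r'" using Suc by (simp add: pochhammer_rec')
    hence "x * pochhammer x (r - 1) \<le> pochhammer x r"
      using Suc poch_nonneg[of x r'] \<open>0 \<le> x\<close> by (simp add: mult_right_mono)
    thus ?thesis
      by (metis mult.left_commute mult_left_mono of_nat_0_le_iff zero_le_power2)
  qed simp
  have pn: "0 \<le> pochhammer x r" using poch_nonneg \<open>0 \<le> x\<close> by simp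
  have d: "pochhammer x (Suc r) - x ^ Suc r = x * (pochhammer x r - x ^ r) + r * pochhammer x r"
    unfolding e by (simp add: algebra_simps)
  have "x * (pochhammer x r - x ^ r) \<le> x * (real r ^ 2 * pochhammer x (r - 1))"
    using ih2 \<open>0 \<le> x\<close> by (intro mult_left_mono) auto
  also have "\<dots> \<le> real r ^ 2 * pochhammer x r" using xp .
  finally have "pochhammer x (Suc r) - x ^ Suc r \<le> (real r ^ 2 + r) * pochhammer x r"
    unfolding d by (simp add: algebra_simps)
  also have "\<dots> \<le> real (Suc r) ^ 2 * pochhammer x r"
    using pn by (intro mult_right_mono) (auto simp: power2_eq_square algebra_simps)
  finally show ?case using d ih1 pn \<open>0 \<le> x\<close> by simp
qed

lemma poch_le_pow: "1 \<le> (x::real) \<Longrightarrow> pochhammer x k \<le> (x * k) ^ k"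
proof -
  assume x: "1 \<le> x"
  have "pochhammer x k = (\<Prod>i<k. x + real i)" by (simp add: pochhammer_prod atLeast0LessThan)
  also have "\<dots> \<le> (\<Prod>i<k. x * real k)"
  proof (intro prod_mono conjI)
    fix i assume "i \<in> {..<k}"
    hence "real i + 1 \<le> real k" by simp
    have "real i \<le> x * real i" using x mult_right_mono[of 1 x "real i"] by simp
    hence "x + real i \<le> x + x * real i" by simp
    also have "\<dots> = x * (real i + 1)" by (simp add: algebra_simps)
    also have "\<dots> \<le> x * real k" using \<open>real i + 1 \<le> real k\<close> x by (intro mult_left_mono) auto
    finally show "x + real i \<le> x * real k" .
  qed (use x in auto)
  also have "\<dots> = (x * k) ^ k" by simp
  finally show ?thesis .
qed

lemma set_kern:
  assumes "b \<le> m" "0 < m" "0 \<le> mu" "mu \<le> 1"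
  shows "set_pmf (kern mu m b) \<subseteq> {..Suc m}"
proof
  fix y assume y: "y \<in> set_pmf (kern mu m b)"
  have p: "0 \<le> real b / real m" "real b / real m \<le> 1" using assms by auto
  from y obtain mt x1 x2 where mt: "mt \<in> set_pmf (bernoulli_pmf (real b / real m))"
    and y': "y = b - of_bool mt + of_bool x1 + of_bool x2"
    unfolding kern_def by auto
  show "y \<in> {..Suc m}"
  proof (cases mt)
    case True then show ?thesis using y' assms by auto
  next
    case False
    with mt have "pmf (bernoulli_pmf (real b / real m)) False \<noteq> 0" by (simp add: set_pmf_iff)
    hence "real b / real m \<noteq> 1" using p by simp
    hence "b \<noteq> m" using assms by auto
    hence "b < m" using assms by simp
    then show ?thesis using y' False by auto
  qed
qed

lemma set_ch: assumes "0 \<le> mu" "mu \<le> 1" shows "set_pmf (ch mu m) \<subseteq> {..m}"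
proof (induction m)
  case (Suc m)
  show ?case
  proof (cases "m = 0")
    case False
    have "set_pmf (ch mu (Suc m)) = (\<Union>b\<in>set_pmf (ch mu m). set_pmf (kern mu m b))"
      using False by simp
    also have "\<dots> \<subseteq> {..Suc m}"
      using Suc set_kern[of _ m mu] assms False by fastforce
    finally show ?thesis .
  qed simp
qed simp

definition E :: "real \<Rightarrow> nat \<Rightarrow> (nat \<Rightarrow> real) \<Rightarrow> real" where
  "E mu m f = measure_pmf.expectation (ch mu m) f"

definition Ek :: "real \<Rightarrow> nat \<Rightarrow> nat \<Rightarrow> (nat \<Rightarrow> real) \<Rightarrow> real" where
  "Ek mu m b f =
     (real b / real m) * ((1 - mu/3)^2 * f (b - 1 + 2) + 2 * (mu/3) * (1 - mu/3) * f (b - 1 + 1)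
         + (mu/3)^2 * f (b - 1))
   + (1 - real b / real m) * ((1 - mu)^2 * f b + 2 * mu * (1 - mu) * f (b + 1) + mu^2 * f (b + 2))"

lemma E_sum: assumes "0 \<le> mu" "mu \<le> 1" shows "E mu m f = (\<Sum>b\<le>m. pmf (ch mu m) b * f b)"
  unfolding E_def using set_ch[OF assms, of m]
  by (subst integral_measure_pmf[of "{..m}"]) auto

lemma E_step:
  assumes "0 \<le> mu" "mu \<le> 1" "0 < m"
  shows "E mu (Suc m) f = E mu m (\<lambda>b. Ek mu m b f)"
proof -
  have fin: "finite (set_pmf (ch mu m))" using set_ch[OF assms(1,2), of m] finite_subset by blast
  have "E mu (Suc m) f = measure_pmf.expectation (ch mu m) (\<lambda>b. measure_pmf.expectation (kern mu m b) f)"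
    unfolding E_def using assms fin by (simp add: expectation_bind_finite)
  also have "\<dots> = (\<Sum>b\<le>m. pmf (ch mu m) b * measure_pmf.expectation (kern mu m b) f)"
    using set_ch[OF assms(1,2), of m] by (subst integral_measure_pmf[of "{..m}"]) auto
  also have "\<dots> = (\<Sum>b\<le>m. pmf (ch mu m) b * Ek mu m b f)"
    using assms by (intro sum.cong refl) (simp add: E_kern Ek_def)
  also have "\<dots> = E mu m (\<lambda>b. Ek mu m b f)" using E_sum assms by simp
  finally show ?thesis .
qed

lemma E_mono: assumes "0 \<le> mu" "mu \<le> 1" "\<And>b. b \<le> m \<Longrightarrow> f b \<le> g b" shows "E mu m f \<le> E mu m g"
  unfolding E_sum[OF assms(1,2)] using assms(3) by (intro sum_mono mult_left_mono) auto

lemma E_add: assumes "0 \<le> mu" "mu \<le> 1" shows "E mu m (\<lambda>b. f b + g b) = E mu m f + E mu m g"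
  unfolding E_sum[OF assms] by (simp add: algebra_simps sum.distrib)

lemma E_diff: assumes "0 \<le> mu" "mu \<le> 1" shows "E mu m (\<lambda>b. f b - g b) = E mu m f - E mu m g"
  unfolding E_sum[OF assms] by (simp add: algebra_simps sum_subtractf)

lemma E_cmult: assumes "0 \<le> mu" "mu \<le> 1" shows "E mu m (\<lambda>b. c * f b) = c * E mu m f"
  unfolding E_sum[OF assms] by (simp add: algebra_simps sum_distrib_left)

lemma E_const: assumes "0 \<le> mu" "mu \<le> 1" shows "E mu m (\<lambda>b. c) = c"
proof -
  have "(\<Sum>b\<le>m. pmf (ch mu m) b) = 1" using set_ch[OF assms, of m] by (intro sum_pmf_eq_1) auto
  thus ?thesis unfolding E_sum[OF assms] by (simp add: sum_distrib_right[symmetric])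
qed

lemma E_cong: assumes "0 \<le> mu" "mu \<le> 1" "\<And>b. b \<le> m \<Longrightarrow> f b = g b" shows "E mu m f = E mu m g"
  unfolding E_sum[OF assms(1,2)] using assms(3) by simp

lemma E_nonneg: assumes "0 \<le> mu" "mu \<le> 1" "\<And>b. b \<le> m \<Longrightarrow> 0 \<le> f b" shows "0 \<le> E mu m f"
  using E_mono[OF assms(1,2), of m "\<lambda>_. 0" f] E_const[OF assms(1,2)] assms(3) by simp

lemma ch_1: "ch mu (Suc 0) = return_pmf 0" by simp

lemma E_1: "E mu (Suc 0) f = f 0" unfolding E_def by simp

lemma Ek_poch:
  assumes "b \<le> m" "0 < m"
  shows "Ek mu m b (\<lambda>b. pochhammer (real b) (Suc k)) =
    pochhammer (real b) (Suc k) + real (Suc k) * pochhammer (real b) (Suc k) / real m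
    - (real b / real m) * ((mu/3) * (2 - mu/3) * real (Suc k) * pochhammer (real b + 1) k
                          + (mu/3)^2 * real (Suc k) * pochhammer (real b) k)
    + (1 - real b / real m) * (mu * (2 - mu) * real (Suc k) * pochhammer (real b + 1) k
                          + mu^2 * real (Suc k) * pochhammer (real b + 2) k)"
proof -
  define r where "r = real (Suc k)"
  define y where "y = real b"
  have d0: "pochhammer (y+1) (Suc k) = pochhammer y (Suc k) + r * pochhammer (y+1) k"
    using poch_diff[of y k] by (simp add: r_def)
  have d1: "pochhammer (y+2) (Suc k) = pochhammer (y+1) (Suc k) + r * pochhammer (y+2) k"
    using poch_diff[of "y+1" k] by (simp add: r_def add.assoc)
  have rec: "y * pochhammer (y+1) k = pochhammer y (Suc k)"
    by (simp add: pochhammer_rec)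
  have dm: "pochhammer (y - 1) (Suc k) = pochhammer y (Suc k) - r * pochhammer y k"
    using poch_diff[of "y - 1" k] by (simp add: r_def)
  have mut: "(y / real m) * ((1 - mu/3)^2 * pochhammer (real (b - 1 + 2)) (Suc k) + 2 * (mu/3) * (1 - mu/3) * pochhammer (real (b - 1 + 1)) (Suc k)
         + (mu/3)^2 * pochhammer (real (b - 1)) (Suc k))
     = (y / real m) * (pochhammer y (Suc k) + r * pochhammer (y+1) k
        - ((mu/3) * (2 - mu/3) * r * pochhammer (y + 1) k + (mu/3)^2 * r * pochhammer y k))"
  proof (cases b)
    case 0 then show ?thesis by (simp add: y_def)
  next
    case (Suc b')
    have e1: "real (b - 1 + 2) = y + 1" "real (b - 1 + 1) = y" "real (b - 1) = y - 1"
      using Suc by (simp_all add: y_def)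
    have "(1 - mu/3)^2 * (pochhammer y (Suc k) + r * pochhammer (y + 1) k) + 2 * (mu/3) * (1 - mu/3) * pochhammer y (Suc k)
         + (mu/3)^2 * (pochhammer y (Suc k) - r * pochhammer y k)
       = pochhammer y (Suc k) + r * pochhammer (y+1) k
        - ((mu/3) * (2 - mu/3) * r * pochhammer (y + 1) k + (mu/3)^2 * r * pochhammer y k)"
      by (simp add: field_simps power2_eq_square)
    then show ?thesis unfolding e1 d0 dm by simp
  qed
  have wild: "(1 - mu)^2 * pochhammer (real b) (Suc k) + 2 * mu * (1 - mu) * pochhammer (real (b + 1)) (Suc k)
         + mu^2 * pochhammer (real (b + 2)) (Suc k)
      = pochhammer y (Suc k) + (mu * (2 - mu) * r * pochhammer (y + 1) k + mu^2 * r * pochhammer (y + 2) k)"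
  proof -
    have e2: "real (b + 1) = y + 1" "real (b + 2) = y + 2" "real b = y" by (simp_all add: y_def)
    show ?thesis unfolding e2 d1 d0 by (simp add: algebra_simps power2_eq_square)
  qed
  have "Ek mu m b (\<lambda>b. pochhammer (real b) (Suc k)) =
     (y / real m) * (pochhammer y (Suc k) + r * pochhammer (y+1) k
        - ((mu/3) * (2 - mu/3) * r * pochhammer (y + 1) k + (mu/3)^2 * r * pochhammer y k))
   + (1 - y / real m) * (pochhammer y (Suc k) + (mu * (2 - mu) * r * pochhammer (y + 1) k + mu^2 * r * pochhammer (y + 2) k))"
    unfolding Ek_def using mut wild by (simp add: y_def)
  also have "\<dots> = pochhammer y (Suc k) + r * (y * pochhammer (y+1) k) / real m
        - (y / real m) * ((mu/3) * (2 - mu/3) * r * pochhammer (y + 1) k + (mu/3)^2 * r * pochhammer y k)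
        + (1 - y / real m) * (mu * (2 - mu) * r * pochhammer (y + 1) k + mu^2 * r * pochhammer (y + 2) k)"
    by (simp add: algebra_simps)
  finally show ?thesis unfolding rec by (simp add: y_def r_def)
qed

lemma poch2_fact: "pochhammer (2::real) k = fact (Suc k)"
proof -
  have "pochhammer (1::real) (Suc k) = 1 * pochhammer (1 + 1) k" by (rule pochhammer_rec)
  thus ?thesis by (simp add: pochhammer_fact)
qed

lemma mu_aux1: "mu * (2 - mu) \<le> 2 * (mu::real)"
proof -
  have "0 \<le> mu * mu" by simp
  thus ?thesis by (simp add: algebra_simps)
qed

lemma mu_aux2: "0 \<le> (mu::real) \<Longrightarrow> mu \<le> 1 \<Longrightarrow> mu * mu \<le> mu"
  using mult_left_mono[of mu 1 mu] by simp

lemma Ek_upper: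
  assumes "b \<le> m" "0 < m" "0 \<le> mu" "mu \<le> 1"
  shows "Ek mu m b (\<lambda>b. pochhammer (real b) (Suc k)) \<le>
     pochhammer (real b) (Suc k) * (real m + real (Suc k)) / real m
     + fact (Suc k) * (2 * mu + real (Suc k) * mu^2)
     + 2 * real (Suc k)^2 * (real (Suc k) + 1) * mu * pochhammer (real b) k"
proof -
  define r where "r = real (Suc k)"
  define t where "t = real b / real m"
  define Q0 where "Q0 = pochhammer (real b) k"
  define Q1 where "Q1 = pochhammer (real b + 1) k"
  define Q2 where "Q2 = pochhammer (real b + 2) k"
  define P0 where "P0 = pochhammer (real b) (Suc k)"
  have t: "0 \<le> t" "t \<le> 1" using assms by (auto simp: t_def)
  have q: "0 \<le> Q0" "0 \<le> Q1" "0 \<le> Q2" "0 \<le> P0" unfolding Q0_def Q1_def Q2_def P0_def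
    by (auto intro!: poch_nonneg)
  have r1: "1 \<le> r" by (simp add: r_def)
  have mutnn: "0 \<le> t * ((mu/3) * (2 - mu/3) * r * Q1 + (mu/3)^2 * r * Q0)"
    using t q assms r1 by (intro mult_nonneg_nonneg add_nonneg_nonneg) auto
  have W: "(1 - t) * (mu * (2 - mu) * r * Q1 + mu^2 * r * Q2) \<le> fact (Suc k) * (2 * mu + r * mu^2) + 2 * r^2 * (r + 1) * mu * Q0"
  proof (cases b)
    case 0
    have "Q1 = fact k" "Q2 = fact (Suc k)" using 0 by (simp_all add: Q1_def Q2_def pochhammer_fact poch2_fact)
    moreover have "fact (Suc k) = r * fact k" by (simp add: r_def)
    moreover have "t = 0" using 0 by (simp add: t_def)
    ultimately have "(1 - t) * (mu * (2 - mu) * r * Q1 + mu^2 * r * Q2) = fact (Suc k) * (mu * (2 - mu) + r * mu^2)"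
      by (simp add: algebra_simps)
    also have "\<dots> \<le> fact (Suc k) * (2 * mu + r * mu^2)"
      using assms mu_aux1[of mu] by (intro mult_left_mono) auto
    also have "\<dots> \<le> fact (Suc k) * (2 * mu + r * mu^2) + 2 * r^2 * (r + 1) * mu * Q0"
      using q assms r1 by simp
    finally show ?thesis .
  next
    case (Suc b')
    have b1: "1 \<le> real b" using Suc by simp
    have Q1b: "Q1 \<le> r * Q0" unfolding Q1_def Q0_def r_def using poch_shift_le[OF b1] by simp
    have Q2b: "Q2 \<le> r * Q1" unfolding Q2_def Q1_def r_def using poch_shift_le[of "real b + 1" k] b1
      by (simp add: add.assoc)
    have "(1 - t) * (mu * (2 - mu) * r * Q1 + mu^2 * r * Q2) \<le> mu * (2 - mu) * r * Q1 + mu^2 * r * Q2"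
      using t q assms r1 by (intro mult_left_le_one_le add_nonneg_nonneg mult_nonneg_nonneg) auto
    also have "\<dots> \<le> (2 * mu) * r * Q1 + mu * r * Q2"
      using q assms r1 mu_aux1[of mu] mu_aux2[of mu] by (intro add_mono mult_right_mono) (auto simp: power2_eq_square)
    also have "\<dots> \<le> (2 * mu) * r * (r * Q0) + mu * r * (r * (r * Q0))"
      using Q1b Q2b q assms r1
      by (intro add_mono mult_left_mono) (auto intro: order_trans mult_left_mono)
    also have "\<dots> = mu * Q0 * (2 * r^2 + r^3)" by (simp add: algebra_simps power2_eq_square power3_eq_cube)
    also have "\<dots> \<le> mu * Q0 * (2 * r^2 * (r + 1))"
      using q assms r1 by (intro mult_left_mono) (auto simp: algebra_simps power2_eq_square power3_eq_cube)
    also have "\<dots> \<le> fact (Suc k) * (2 * mu + r * mu^2) + 2 * r^2 * (r + 1) * mu * Q0"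
      using assms r1 by (simp add: algebra_simps)
    finally show ?thesis .
  qed
  have "Ek mu m b (\<lambda>b. pochhammer (real b) (Suc k)) = P0 + r * P0 / real m
     - t * ((mu/3) * (2 - mu/3) * r * Q1 + (mu/3)^2 * r * Q0)
     + (1 - t) * (mu * (2 - mu) * r * Q1 + mu^2 * r * Q2)"
    using Ek_poch[OF assms(1,2), of mu k] by (simp add: r_def t_def Q0_def Q1_def Q2_def P0_def)
  also have "\<dots> \<le> P0 + r * P0 / real m + (fact (Suc k) * (2 * mu + r * mu^2) + 2 * r^2 * (r + 1) * mu * Q0)"
    using mutnn W by linarith
  also have "P0 + r * P0 / real m = P0 * (real m + r) / real m" using assms by (simp add: field_simps)
  finally show ?thesis by (simp add: r_def P0_def Q0_def add.assoc)
qed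

lemma Ek_lower:
  assumes "b \<le> m" "0 < m" "0 \<le> mu" "mu \<le> 1"
  shows "Ek mu m b (\<lambda>b. pochhammer (real b) (Suc k)) \<ge>
     pochhammer (real b) (Suc k) * (real m + real (Suc k)) / real m
     + 2 * mu * fact (Suc k) * (1 - real b)
     - 2 * mu * real (Suc k) * pochhammer (real b) (Suc k) / real m"
proof -
  define r where "r = real (Suc k)"
  define t where "t = real b / real m"
  define Q0 where "Q0 = pochhammer (real b) k"
  define Q1 where "Q1 = pochhammer (real b + 1) k"
  define Q2 where "Q2 = pochhammer (real b + 2) k"
  define P0 where "P0 = pochhammer (real b) (Suc k)"
  have t: "0 \<le> t" "t \<le> 1" using assms by (auto simp: t_def)
  have q: "0 \<le> Q0" "0 \<le> Q1" "0 \<le> Q2" "0 \<le> P0" unfolding Q0_def Q1_def Q2_def P0_def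
    by (auto intro!: poch_nonneg)
  have r1: "1 \<le> r" by (simp add: r_def)
  have Q01: "Q0 \<le> Q1" unfolding Q0_def Q1_def by (rule poch_mono) auto
  have tQ1: "t * Q1 = P0 / real m" unfolding t_def Q1_def P0_def by (simp add: pochhammer_rec)
  have mut: "t * ((mu/3) * (2 - mu/3) * r * Q1 + (mu/3)^2 * r * Q0) \<le> mu * r * P0 / real m"
  proof -
    have "(mu/3) * (2 - mu/3) * r * Q1 + (mu/3)^2 * r * Q0 \<le> (2 * mu / 3) * r * Q1 + (mu/3) * r * Q1"
      using q assms r1 Q01 mu_aux2[of mu]
      by (intro add_mono mult_right_mono mult_mono) (auto simp: power2_eq_square field_simps)
    also have "\<dots> = mu * r * Q1" by (simp add: field_simps)
    finally have "t * ((mu/3) * (2 - mu/3) * r * Q1 + (mu/3)^2 * r * Q0) \<le> t * (mu * r * Q1)"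
      using t by (intro mult_left_mono) auto
    also have "\<dots> = mu * r * (t * Q1)" by (simp add: algebra_simps)
    finally show ?thesis unfolding tQ1 by simp
  qed
  have W: "(1 - t) * (mu * (2 - mu) * r * Q1 + mu^2 * r * Q2) \<ge> 2 * mu * fact (Suc k) * (1 - real b)"
  proof (cases b)
    case 0
    have "Q1 = fact k" "Q2 = fact (Suc k)" using 0 by (simp_all add: Q1_def Q2_def pochhammer_fact poch2_fact)
    moreover have "fact (Suc k) = r * fact k" by (simp add: r_def)
    moreover have "t = 0" using 0 by (simp add: t_def)
    ultimately have "(1 - t) * (mu * (2 - mu) * r * Q1 + mu^2 * r * Q2) = fact (Suc k) * (2 * mu + (r - 1) * mu^2)"
      by (simp add: algebra_simps power2_eq_square)
    also have "\<dots> \<ge> fact (Suc k) * (2 * mu)"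
      using assms r1 by (intro mult_left_mono) auto
    finally show ?thesis using 0 by (simp add: algebra_simps)
  next
    case (Suc b')
    have "0 \<le> (1 - t) * (mu * (2 - mu) * r * Q1 + mu^2 * r * Q2)"
      using t q assms r1 by (intro mult_nonneg_nonneg add_nonneg_nonneg) auto
    moreover have "2 * mu * fact (Suc k) * (1 - real b) \<le> 0"
      using Suc assms by (intro mult_nonneg_nonpos) auto
    ultimately show ?thesis by linarith
  qed
  have "Ek mu m b (\<lambda>b. pochhammer (real b) (Suc k)) = P0 + r * P0 / real m
     - t * ((mu/3) * (2 - mu/3) * r * Q1 + (mu/3)^2 * r * Q0)
     + (1 - t) * (mu * (2 - mu) * r * Q1 + mu^2 * r * Q2)"
    using Ek_poch[OF assms(1,2), of mu k] by (simp add: r_def t_def Q0_def Q1_def Q2_def P0_def)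
  also have "\<dots> \<ge> P0 + r * P0 / real m - mu * r * P0 / real m + 2 * mu * fact (Suc k) * (1 - real b)"
    using mut W by linarith
  also have "P0 + r * P0 / real m = P0 * (real m + r) / real m" using assms by (simp add: field_simps)
  finally have "Ek mu m b (\<lambda>b. pochhammer (real b) (Suc k)) \<ge>
       P0 * (real m + r) / real m - mu * r * P0 / real m + 2 * mu * fact (Suc k) * (1 - real b)" by simp
  moreover have "mu * r * P0 / real m \<le> 2 * mu * r * P0 / real m"
    using q assms r1 by (intro divide_right_mono) (auto simp: mult_right_mono)
  ultimately show ?thesis by (simp add: r_def P0_def)
qed

definition Gm :: "real \<Rightarrow> nat \<Rightarrow> nat \<Rightarrow> real" where
  "Gm mu r m = E mu m (\<lambda>b. pochhammer (real b) r)"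

definition Hm :: "real \<Rightarrow> nat \<Rightarrow> nat \<Rightarrow> real" where
  "Hm mu r m = Gm mu r m / pochhammer (real m) r"

definition hs :: "nat \<Rightarrow> real" where
  "hs m = (\<Sum>j<m. 1 / real (Suc j))"

lemma hs_Suc: "hs (Suc m) = hs m + 1 / real (Suc m)" by (simp add: hs_def)

lemma hs_ge1: "1 \<le> m \<Longrightarrow> 1 \<le> hs m"
proof (induction m)
  case (Suc m)
  have "0 \<le> 1 / (1 + real m)" by simp
  show ?case
  proof (cases "m = 0")
    case True then show ?thesis by (simp add: hs_def)
  next
    case False
    have "hs (Suc m) = hs m + 1 / real (Suc m)" by (rule hs_Suc)
    moreover have "0 \<le> 1 / real (Suc m)" by simp
    ultimately show ?thesis using Suc False by linarith
  qed
qed simp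

lemma hs_pow_step: assumes "1 \<le> m"
  shows "hs m ^ Suc k + hs m ^ k / real (Suc m) \<le> hs (Suc m) ^ Suc k"
proof -
  have h1: "1 \<le> hs m" using hs_ge1 assms by simp
  have "hs m ^ Suc k + hs m ^ k / real (Suc m) = hs m ^ k * hs (Suc m)"
    by (simp add: hs_Suc algebra_simps)
  also have "\<dots> \<le> hs (Suc m) ^ k * hs (Suc m)"
    using h1 by (intro mult_right_mono power_mono) (auto simp: hs_Suc)
  finally show ?thesis by (simp add: algebra_simps)
qed

lemma G_nonneg: "0 \<le> mu \<Longrightarrow> mu \<le> 1 \<Longrightarrow> 0 \<le> Gm mu r m"
  unfolding Gm_def by (intro E_nonneg poch_nonneg) auto

lemma H_nonneg: "0 \<le> mu \<Longrightarrow> mu \<le> 1 \<Longrightarrow> 0 \<le> Hm mu r m"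
  unfolding Hm_def using G_nonneg poch_nonneg by simp

lemma G0: "0 \<le> mu \<Longrightarrow> mu \<le> 1 \<Longrightarrow> Gm mu 0 m = 1"
  unfolding Gm_def by (simp add: E_const)

lemma H0: "0 \<le> mu \<Longrightarrow> mu \<le> 1 \<Longrightarrow> Hm mu 0 m = 1"
  unfolding Hm_def by (simp add: G0)

lemma H1: "Hm mu (Suc k) (Suc 0) = 0"
proof -
  have "pochhammer (0::real) (Suc k) = 0" by (simp add: pochhammer_rec)
  thus ?thesis unfolding Hm_def Gm_def E_1 by simp
qed

lemma poch_Suc_m: "pochhammer (real m + 1) r * real m = pochhammer (real m) r * (real m + real r)"
  by (metis mult.commute pochhammer_rec pochhammer_rec')

lemma poch_pos: "0 < m \<Longrightarrow> 0 < pochhammer (real m) r"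
  by (induction r) (auto simp: pochhammer_rec')

lemma E_lin3: assumes "0 \<le> mu" "mu \<le> 1"
  shows "E mu m (\<lambda>b. c * f b + (d + e * g b)) = c * E mu m f + (d + e * E mu m g)"
  using E_add[OF assms, of m "\<lambda>b. c * f b" "\<lambda>b. d + e * g b"]
    E_add[OF assms, of m "\<lambda>b. d" "\<lambda>b. e * g b"] E_cmult[OF assms] E_const[OF assms] by simp

lemma E_lin3': assumes "0 \<le> mu" "mu \<le> 1"
  shows "E mu m (\<lambda>b. c * f b + (d - e * g b) - c' * f b) = c * E mu m f + (d - e * E mu m g) - c' * E mu m f"
  using E_add[OF assms, of m "\<lambda>b. c * f b" "\<lambda>b. d - e * g b"]
    E_diff[OF assms, of m "\<lambda>b. c * f b + (d - e * g b)" "\<lambda>b. c' * f b"]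
    E_diff[OF assms, of m "\<lambda>b. d" "\<lambda>b. e * g b"] E_cmult[OF assms] E_const[OF assms] by simp

lemma G_up:
  assumes "0 \<le> mu" "mu \<le> 1" "0 < m"
  shows "Gm mu (Suc k) (Suc m) \<le> (real m + real (Suc k)) / real m * Gm mu (Suc k) m
     + fact (Suc k) * (2 * mu + real (Suc k) * mu^2)
     + 2 * real (Suc k)^2 * (real (Suc k) + 1) * mu * Gm mu k m"
proof -
  have "Gm mu (Suc k) (Suc m) = E mu m (\<lambda>b. Ek mu m b (\<lambda>b. pochhammer (real b) (Suc k)))"
    unfolding Gm_def using assms by (simp add: E_step)
  also have "\<dots> \<le> E mu m (\<lambda>b. (real m + real (Suc k)) / real m * pochhammer (real b) (Suc k)
     + (fact (Suc k) * (2 * mu + real (Suc k) * mu^2)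
     + (2 * real (Suc k)^2 * (real (Suc k) + 1) * mu) * pochhammer (real b) k))"
    using assms by (intro E_mono) (auto dest: Ek_upper[of _ m mu k] simp: field_simps)
  also have "\<dots> = (real m + real (Suc k)) / real m * Gm mu (Suc k) m
     + fact (Suc k) * (2 * mu + real (Suc k) * mu^2)
     + 2 * real (Suc k)^2 * (real (Suc k) + 1) * mu * Gm mu k m"
    using assms unfolding Gm_def by (subst E_lin3[OF assms(1,2)]) (simp add: add.assoc)
  finally show ?thesis .
qed

lemma G_lo:
  assumes "0 \<le> mu" "mu \<le> 1" "0 < m"
  shows "Gm mu (Suc k) (Suc m) \<ge> (real m + real (Suc k)) / real m * Gm mu (Suc k) m
     + 2 * mu * fact (Suc k) * (1 - Gm mu 1 m)
     - 2 * mu * real (Suc k) / real m * Gm mu (Suc k) m"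
proof -
  have g1: "Gm mu 1 m = E mu m (\<lambda>b. real b)" unfolding Gm_def by simp
  have "Gm mu (Suc k) (Suc m) = E mu m (\<lambda>b. Ek mu m b (\<lambda>b. pochhammer (real b) (Suc k)))"
    unfolding Gm_def using assms by (simp add: E_step)
  also have "\<dots> \<ge> E mu m (\<lambda>b. (real m + real (Suc k)) / real m * pochhammer (real b) (Suc k)
     + (2 * mu * fact (Suc k) - (2 * mu * fact (Suc k)) * real b)
     - (2 * mu * real (Suc k) / real m) * pochhammer (real b) (Suc k))"
    using assms by (intro E_mono) (auto dest: Ek_lower[of _ m mu k] simp: field_simps)
  also have "E mu m (\<lambda>b. (real m + real (Suc k)) / real m * pochhammer (real b) (Suc k)
     + (2 * mu * fact (Suc k) - (2 * mu * fact (Suc k)) * real b)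
     - (2 * mu * real (Suc k) / real m) * pochhammer (real b) (Suc k)) =
     (real m + real (Suc k)) / real m * Gm mu (Suc k) m
     + 2 * mu * fact (Suc k) * (1 - Gm mu 1 m)
     - 2 * mu * real (Suc k) / real m * Gm mu (Suc k) m"
    using assms unfolding g1 unfolding Gm_def by (subst E_lin3') (auto simp: algebra_simps)
  finally show ?thesis .
qed

fun Acoef :: "nat \<Rightarrow> real" where
  "Acoef 0 = 1"
| "Acoef (Suc k) = real (Suc k) * (2 + real (Suc k)) + 2 * real (Suc k)^2 * (real (Suc k) + 1) * Acoef k"

lemma Acoef_nonneg: "0 \<le> Acoef k"
  by (induction k) auto

lemma poch_pos1: "0 < pochhammer (real m + 1) k"
  using poch_pos[of "Suc m" k] by (simp add: add.commute)

lemma poch_ratio1: "(real m + 1) * pochhammer (real m) k \<le> pochhammer (real m + 1) (Suc k)"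
proof -
  have "pochhammer (real m + 1) (Suc k) = (real m + 1) * pochhammer (real m + 1 + 1) k"
    by (rule pochhammer_rec)
  moreover have "pochhammer (real m) k \<le> pochhammer (real m + 1 + 1) k" by (rule poch_mono) auto
  ultimately show ?thesis by (simp add: mult_left_mono)
qed

lemma poch_ratio2: "(real m + 1) * fact k \<le> pochhammer (real m + 1) (Suc k)"
proof -
  have "pochhammer (real m + 1) (Suc k) = (real m + 1) * pochhammer (real m + 1 + 1) k"
    by (rule pochhammer_rec)
  moreover have "fact k \<le> pochhammer (real m + 1 + 1) k" by (rule poch_fact_le) auto
  ultimately show ?thesis by (simp add: mult_left_mono)
qed

lemma fact_poch_le: "fact (Suc k) / pochhammer (real m + 1) (Suc k) \<le> real (Suc k) / (real m + 1)"
proof -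
  have p: "0 < pochhammer (real m + 1) (Suc k)" using poch_pos1[of m "Suc k"] by simp
  have "fact (Suc k) * (real m + 1) = real (Suc k) * ((real m + 1) * fact k)" by (simp add: algebra_simps)
  also have "\<dots> \<le> real (Suc k) * pochhammer (real m + 1) (Suc k)"
    using poch_ratio2 by (intro mult_left_mono) auto
  finally show ?thesis using p by (simp add: divide_simps)
qed

lemma G_over_poch: assumes "0 \<le> mu" "mu \<le> 1"
  shows "Gm mu k m / pochhammer (real m + 1) (Suc k) \<le> Hm mu k m / (real m + 1)"
proof (cases "m = 0")
  case True
  have "Gm mu k 0 / pochhammer 1 (Suc k) \<le> Hm mu k 0 / 1"
  proof -
    have "Gm mu k 0 = Hm mu k 0 * pochhammer 0 k \<or> k > 0"
      by (cases k) (auto simp: Hm_def)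
    show ?thesis
    proof (cases k)
      case 0 then show ?thesis by (simp add: Hm_def)
    next
      case (Suc k')
      have "pochhammer (0::real) (Suc k') = 0" by (simp add: pochhammer_rec)
      moreover have "Gm mu k 0 = pochhammer 0 k" unfolding Gm_def E_def by simp
      ultimately show ?thesis using Suc by (simp add: Hm_def)
    qed
  qed
  thus ?thesis using True by simp
next
  case False
  have pm: "0 < pochhammer (real m) k" using poch_pos False by simp
  have p: "0 < pochhammer (real m + 1) (Suc k)" using poch_pos1[of m "Suc k"] by simp
  have g: "Gm mu k m = Hm mu k m * pochhammer (real m) k" using pm by (simp add: Hm_def)
  have h: "0 \<le> Hm mu k m" using H_nonneg assms by simp
  have "Gm mu k m * (real m + 1) = Hm mu k m * ((real m + 1) * pochhammer (real m) k)"
    unfolding g by (simp add: algebra_simps)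
  also have "\<dots> \<le> Hm mu k m * pochhammer (real m + 1) (Suc k)"
    using poch_ratio1 h by (intro mult_left_mono) auto
  finally show ?thesis using p by (simp add: divide_simps)
qed

lemma H_up_step:
  assumes "0 \<le> mu" "mu \<le> 1" "0 < m"
  shows "Hm mu (Suc k) (Suc m) \<le> Hm mu (Suc k) m
     + real (Suc k) * (2 * mu + real (Suc k) * mu^2) / (real m + 1)
     + 2 * real (Suc k)^2 * (real (Suc k) + 1) * mu * (Hm mu k m / (real m + 1))"
proof -
  define r where "r = real (Suc k)"
  define P where "P = pochhammer (real m + 1) (Suc k)"
  have p: "0 < P" using poch_pos1[of m "Suc k"] by (simp add: P_def)
  have pm: "0 < pochhammer (real m) (Suc k)" using poch_pos assms by simp
  have eq: "P * real m = pochhammer (real m) (Suc k) * (real m + r)"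
    unfolding P_def r_def by (rule poch_Suc_m)
  have "Hm mu (Suc k) (Suc m) = Gm mu (Suc k) (Suc m) / P" by (simp add: Hm_def P_def add.commute)
  also have "\<dots> \<le> ((real m + r) / real m * Gm mu (Suc k) m
     + fact (Suc k) * (2 * mu + r * mu^2)
     + 2 * r^2 * (r + 1) * mu * Gm mu k m) / P"
    using G_up[OF assms, of k] p unfolding r_def by (intro divide_right_mono) auto
  also have "\<dots> = (real m + r) / real m * Gm mu (Suc k) m / P
     + fact (Suc k) / P * (2 * mu + r * mu^2)
     + 2 * r^2 * (r + 1) * mu * (Gm mu k m / P)"
    by (simp add: add_divide_distrib)
  also have "(real m + r) / real m * Gm mu (Suc k) m / P = Hm mu (Suc k) m"
  proof -
    have mr: "0 < real m + r" by (simp add: r_def)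
    have "(real m + r) / real m * Gm mu (Suc k) m / P = Gm mu (Suc k) m * (real m + r) / (P * real m)"
      by (simp add: field_simps)
    also have "\<dots> = Gm mu (Suc k) m * (real m + r) / (pochhammer (real m) (Suc k) * (real m + r))"
      using eq by simp
    also have "\<dots> = Hm mu (Suc k) m" using mr unfolding Hm_def by simp
    finally show ?thesis .
  qed
  also have "fact (Suc k) / P * (2 * mu + r * mu^2) \<le> r / (real m + 1) * (2 * mu + r * mu^2)"
    using fact_poch_le[of k m] assms unfolding P_def r_def by (intro mult_right_mono) auto
  also have "2 * r^2 * (r + 1) * mu * (Gm mu k m / P) \<le> 2 * r^2 * (r + 1) * mu * (Hm mu k m / (real m + 1))"
    using G_over_poch[OF assms(1,2), of k m] assms unfolding P_def r_def by (intro mult_left_mono) auto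
  finally show ?thesis unfolding r_def by simp
qed

lemma H_bound_step:
  assumes mu: "0 \<le> mu" "mu \<le> 1"
    and prev: "\<And>m. 1 \<le> m \<Longrightarrow> Hm mu k m \<le> Acoef k * hs m ^ k"
    and m: "1 \<le> m"
  shows "Hm mu (Suc k) m \<le> Acoef (Suc k) * mu * hs m ^ Suc k"
  using m
proof (induction m rule: nat_induct_at_least)
  case base
  then show ?case using H1[of mu k] Acoef_nonneg[of "Suc k"] mu hs_ge1[of 1] by simp
next
  case (Suc m)
  define r where "r = real (Suc k)"
  define c where "c = 2 * r^2 * (r + 1)"
  have A: "Acoef (Suc k) = r * (2 + r) + c * Acoef k" by (simp add: r_def c_def)
  have h1: "1 \<le> hs m" using hs_ge1 Suc by simp
  have hk: "1 \<le> hs m ^ k" using h1 by simp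
  have c0: "0 \<le> c" "0 \<le> r" by (auto simp: c_def r_def)
  have m1: "0 < real m + 1" by simp
  have s1: "Hm mu (Suc k) (Suc m) \<le> Hm mu (Suc k) m + r * (2 * mu + r * mu^2) / (real m + 1)
     + c * mu * (Hm mu k m / (real m + 1))"
    using H_up_step[OF mu, of m k] Suc by (simp add: r_def c_def)
  have s2: "r * (2 * mu + r * mu^2) / (real m + 1) \<le> r * (2 + r) * mu * hs m ^ k / (real m + 1)"
  proof (intro divide_right_mono)
    have "r * (2 * mu + r * mu^2) \<le> r * (2 * mu + r * mu)"
      using mu c0 mu_aux2[of mu] by (intro mult_left_mono add_mono) (auto simp: power2_eq_square)
    also have "\<dots> = r * (2 + r) * mu * 1" by (simp add: algebra_simps)
    also have "\<dots> \<le> r * (2 + r) * mu * hs m ^ k" using hk mu c0 by (intro mult_left_mono) auto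
    finally show "r * (2 * mu + r * mu^2) \<le> r * (2 + r) * mu * hs m ^ k" .
  qed simp
  have s3: "c * mu * (Hm mu k m / (real m + 1)) \<le> c * mu * (Acoef k * hs m ^ k / (real m + 1))"
    using prev[of m] Suc mu c0 by (intro mult_left_mono divide_right_mono) auto
  have s4: "Hm mu (Suc k) m \<le> Acoef (Suc k) * mu * hs m ^ Suc k" by (rule Suc.IH)
  have s5: "Acoef (Suc k) * mu * hs m ^ Suc k + r * (2 + r) * mu * hs m ^ k / (real m + 1) + c * mu * (Acoef k * hs m ^ k / (real m + 1))
      = Acoef (Suc k) * mu * (hs m ^ Suc k + hs m ^ k / (real m + 1))"
    unfolding A by (simp add: algebra_simps add_divide_distrib)
  have s6: "Acoef (Suc k) * mu * (hs m ^ Suc k + hs m ^ k / (real m + 1)) \<le> Acoef (Suc k) * mu * hs (Suc m) ^ Suc k"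
    using hs_pow_step[of m k] Suc mu Acoef_nonneg[of "Suc k"] by (intro mult_left_mono) (auto simp: add.commute)
  from s1 s2 s3 s4 s5 s6 show ?case by linarith
qed

lemma H_bound:
  assumes "0 \<le> mu" "mu \<le> 1" "1 \<le> m"
  shows "Hm mu (Suc k) m \<le> Acoef (Suc k) * mu * hs m ^ Suc k"
  using assms(3)
proof (induction k arbitrary: m)
  case 0
  show ?case
    by (rule H_bound_step[OF assms(1,2) _ 0]) (use H0[OF assms(1,2)] in simp)
next
  case (Suc k)
  show ?case
  proof (rule H_bound_step[OF assms(1,2) _ Suc.prems])
    fix m :: nat assume m: "1 \<le> m"
    have "Hm mu (Suc k) m \<le> Acoef (Suc k) * mu * hs m ^ Suc k" using Suc.IH m by simp
    also have "\<dots> \<le> Acoef (Suc k) * 1 * hs m ^ Suc k"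
      using assms Acoef_nonneg[of "Suc k"] hs_ge1[OF m]
      by (intro mult_right_mono mult_left_mono) auto
    finally show "Hm mu (Suc k) m \<le> Acoef (Suc k) * hs m ^ Suc k" by simp
  qed
qed

lemma H_up_step0:
  assumes "0 \<le> mu" "mu \<le> 1" "0 < m"
  shows "Hm mu (Suc k) (Suc m) \<le> Hm mu (Suc k) m
     + fact (Suc k) * (2 * mu + real (Suc k) * mu^2) / pochhammer (real m + 1) (Suc k)
     + 2 * real (Suc k)^2 * (real (Suc k) + 1) * mu * (Hm mu k m / (real m + 1))"
proof -
  define r where "r = real (Suc k)"
  define P where "P = pochhammer (real m + 1) (Suc k)"
  have p: "0 < P" using poch_pos1[of m "Suc k"] by (simp add: P_def)
  have pm: "0 < pochhammer (real m) (Suc k)" using poch_pos assms by simp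
  have eq: "P * real m = pochhammer (real m) (Suc k) * (real m + r)"
    unfolding P_def r_def by (rule poch_Suc_m)
  have "Hm mu (Suc k) (Suc m) = Gm mu (Suc k) (Suc m) / P" by (simp add: Hm_def P_def add.commute)
  also have "\<dots> \<le> ((real m + r) / real m * Gm mu (Suc k) m
     + fact (Suc k) * (2 * mu + r * mu^2)
     + 2 * r^2 * (r + 1) * mu * Gm mu k m) / P"
    using G_up[OF assms, of k] p unfolding r_def by (intro divide_right_mono) auto
  also have "\<dots> = (real m + r) / real m * Gm mu (Suc k) m / P
     + fact (Suc k) * (2 * mu + r * mu^2) / P
     + 2 * r^2 * (r + 1) * mu * (Gm mu k m / P)"
    by (simp add: add_divide_distrib)
  also have "(real m + r) / real m * Gm mu (Suc k) m / P = Hm mu (Suc k) m"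
  proof -
    have mr: "0 < real m + r" by (simp add: r_def)
    have "(real m + r) / real m * Gm mu (Suc k) m / P = Gm mu (Suc k) m * (real m + r) / (P * real m)"
      by (simp add: field_simps)
    also have "\<dots> = Gm mu (Suc k) m * (real m + r) / (pochhammer (real m) (Suc k) * (real m + r))"
      using eq by simp
    also have "\<dots> = Hm mu (Suc k) m" using mr unfolding Hm_def by simp
    finally show ?thesis .
  qed
  also have "2 * r^2 * (r + 1) * mu * (Gm mu k m / P) \<le> 2 * r^2 * (r + 1) * mu * (Hm mu k m / (real m + 1))"
    using G_over_poch[OF assms(1,2), of k m] assms unfolding P_def r_def by (intro mult_left_mono) auto
  finally show ?thesis unfolding r_def P_def by simp
qed

lemma H_lo_step:
  assumes "0 \<le> mu" "mu \<le> 1" "0 < m"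
  shows "Hm mu (Suc k) (Suc m) \<ge> Hm mu (Suc k) m
     + 2 * mu * fact (Suc k) / pochhammer (real m + 1) (Suc k)
     - 2 * mu * (fact (Suc k) * Gm mu 1 m / pochhammer (real m + 1) (Suc k))
     - 2 * mu * real (Suc k) * (Hm mu (Suc k) m / (real m + 1))"
proof -
  define r where "r = real (Suc k)"
  define P where "P = pochhammer (real m + 1) (Suc k)"
  have p: "0 < P" using poch_pos1[of m "Suc k"] by (simp add: P_def)
  have pm: "0 < pochhammer (real m) (Suc k)" using poch_pos assms by simp
  have eq: "P * real m = pochhammer (real m) (Suc k) * (real m + r)"
    unfolding P_def r_def by (rule poch_Suc_m)
  have mr: "0 < real m + r" by (simp add: r_def)
  have hn: "0 \<le> Hm mu (Suc k) m" using H_nonneg assms by simp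
  have "Hm mu (Suc k) (Suc m) = Gm mu (Suc k) (Suc m) / P" by (simp add: Hm_def P_def add.commute)
  also have "\<dots> \<ge> ((real m + r) / real m * Gm mu (Suc k) m
     + 2 * mu * fact (Suc k) * (1 - Gm mu 1 m)
     - 2 * mu * r / real m * Gm mu (Suc k) m) / P"
    using G_lo[OF assms, of k] p unfolding r_def by (intro divide_right_mono) auto
  also have "((real m + r) / real m * Gm mu (Suc k) m
     + 2 * mu * fact (Suc k) * (1 - Gm mu 1 m)
     - 2 * mu * r / real m * Gm mu (Suc k) m) / P =
     (real m + r) / real m * Gm mu (Suc k) m / P
     + 2 * mu * fact (Suc k) / P - 2 * mu * (fact (Suc k) * Gm mu 1 m / P)
     - 2 * mu * r * (Gm mu (Suc k) m / (P * real m))"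
    by (simp add: diff_divide_distrib add_divide_distrib algebra_simps)
  also have "(real m + r) / real m * Gm mu (Suc k) m / P = Hm mu (Suc k) m"
  proof -
    have "(real m + r) / real m * Gm mu (Suc k) m / P = Gm mu (Suc k) m * (real m + r) / (P * real m)"
      by (simp add: field_simps)
    also have "\<dots> = Gm mu (Suc k) m * (real m + r) / (pochhammer (real m) (Suc k) * (real m + r))"
      using eq by simp
    also have "\<dots> = Hm mu (Suc k) m" using mr unfolding Hm_def by simp
    finally show ?thesis .
  qed
  also have "Gm mu (Suc k) m / (P * real m) = Hm mu (Suc k) m / (real m + r)"
    using eq mr pm unfolding Hm_def by (simp add: field_simps)
  finally have f1: "Hm mu (Suc k) m + 2 * mu * fact (Suc k) / P - 2 * mu * (fact (Suc k) * Gm mu 1 m / P)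
     - 2 * mu * r * (Hm mu (Suc k) m / (real m + r)) \<le> Hm mu (Suc k) (Suc m)" .
  have "Hm mu (Suc k) m / (real m + r) \<le> Hm mu (Suc k) m / (real m + 1)"
    using hn by (intro divide_left_mono) (auto simp: r_def)
  hence "2 * mu * r * (Hm mu (Suc k) m / (real m + r)) \<le> 2 * mu * r * (Hm mu (Suc k) m / (real m + 1))"
    using assms by (intro mult_left_mono) (auto simp: r_def)
  with f1 show ?thesis unfolding r_def P_def by linarith
qed

definition Tl :: "nat \<Rightarrow> nat \<Rightarrow> real" where
  "Tl j n = (1 / real (Suc j)) * (1 / fact (Suc (Suc j)) - 1 / pochhammer (real n + 1) (Suc j))"

lemma Tl_step: "Tl j (Suc n) = Tl j n + 1 / pochhammer (real n + 1) (Suc (Suc j))"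
proof -
  define x where "x = real n + 1"
  have x0: "0 < x" by (simp add: x_def)
  define A where "A = pochhammer x (Suc j)"
  define B where "B = pochhammer (x + 1) (Suc j)"
  define C where "C = pochhammer x (Suc (Suc j))"
  define D where "D = pochhammer (x + 1) j"
  have A0: "0 < A" unfolding A_def x_def using poch_pos1[of n "Suc j"] by simp
  have D0: "0 < D" unfolding D_def x_def using poch_pos1[of "Suc n" j] by (simp add: add.commute add.left_commute)
  have BA: "B = A + real (Suc j) * D" unfolding A_def B_def D_def by (rule poch_diff)
  have CA: "C = A * (x + 1 + real j)" unfolding C_def A_def by (simp add: pochhammer_rec' algebra_simps)
  have BD: "B = D * (x + 1 + real j)" unfolding B_def D_def by (simp add: pochhammer_rec' algebra_simps)
  have xj: "0 < x + 1 + real j" using x0 by simp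
  have B0: "0 < B" using BD D0 xj by simp
  have "1 / A - 1 / B = real (Suc j) / C"
  proof -
    have "1 / A - 1 / B = (B - A) / (A * B)" using A0 B0 by (simp add: field_simps)
    also have "\<dots> = real (Suc j) * D / (A * (D * (x + 1 + real j)))" using BA BD by simp
    also have "\<dots> = real (Suc j) / C" using CA D0 by simp
    finally show ?thesis .
  qed
  moreover have "real (Suc n) + 1 = x + 1" by (simp add: x_def)
  ultimately show ?thesis unfolding Tl_def A_def B_def C_def x_def
    by (simp add: field_simps)
qed

lemma Tl_1: "Tl j (Suc 0) = 0"
  unfolding Tl_def using poch2_fact[of "Suc j"] by (simp add: one_add_one)

lemma Tl_aux: "0 < (F::real) \<Longrightarrow> 0 < P \<Longrightarrow> 0 < s \<Longrightarrow> F * ((1/s) * (1/F - 1/P)) = (1/s) * (1 - F/P)"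
  by (simp add: field_simps)

lemma Tl_upper: "fact (Suc (Suc j)) * Tl j n \<le> 1 / real (Suc j)"
proof -
  have p: "0 < pochhammer (real n + 1) (Suc j)" by (rule poch_pos1)
  have "fact (Suc (Suc j)) * Tl j n = (1 / real (Suc j)) * (1 - fact (Suc (Suc j)) / pochhammer (real n + 1) (Suc j))"
    unfolding Tl_def using fact_gt_zero[of "Suc (Suc j)", where 'a=real] p by (intro Tl_aux) auto
  also have "\<dots> \<le> (1 / real (Suc j)) * 1"
    using p by (intro mult_left_mono) auto
  finally show ?thesis by simp
qed

lemma poch_ge_x: "0 < x \<Longrightarrow> x \<le> pochhammer (x::real) (Suc j)"
proof -
  assume x: "0 < x"
  have "pochhammer x (Suc j) = x * pochhammer (x + 1) j" by (rule pochhammer_rec)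
  moreover have "1 \<le> pochhammer (x + 1) j" using x
    by (intro order_trans[OF fact_ge_1[of j, where 'a=real] poch_fact_le]) auto
  ultimately show ?thesis using x by (simp add: mult_le_cancel_left1)
qed

lemma Tl_lower: "fact (Suc (Suc j)) * Tl j n \<ge> 1 / real (Suc j) - fact (Suc (Suc j)) / (real n + 1)"
proof -
  have p: "real n + 1 \<le> pochhammer (real n + 1) (Suc j)" by (rule poch_ge_x) simp
  have p0: "0 < pochhammer (real n + 1) (Suc j)" by (rule poch_pos1)
  have e: "fact (Suc (Suc j)) * Tl j n = (1 / real (Suc j)) * (1 - fact (Suc (Suc j)) / pochhammer (real n + 1) (Suc j))"
    unfolding Tl_def using fact_gt_zero[of "Suc (Suc j)", where 'a=real] p0 by (intro Tl_aux) auto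
  have e2: "(1 / real (Suc j)) * (1 - fact (Suc (Suc j)) / pochhammer (real n + 1) (Suc j))
     = 1 / real (Suc j) - (1 / real (Suc j)) * (fact (Suc (Suc j)) / pochhammer (real n + 1) (Suc j))"
    by (simp add: algebra_simps)
  have i: "(1 / real (Suc j)) * (fact (Suc (Suc j)) / pochhammer (real n + 1) (Suc j)) \<le> 1 * (fact (Suc (Suc j)) / (real n + 1))"
    using p by (intro mult_mono divide_left_mono) auto
  show ?thesis using e e2 i by linarith
qed

lemma H_up_asym:
  assumes mu: "0 \<le> mu" "mu \<le> 1" and n: "1 \<le> n"
  shows "Hm mu (Suc (Suc j)) n \<le> (2 * mu + real (Suc (Suc j)) * mu^2) * (fact (Suc (Suc j)) * Tl j n)
      + 2 * real (Suc (Suc j))^2 * (real (Suc (Suc j)) + 1) * Acoef (Suc j) * mu^2 * hs n ^ Suc (Suc j)"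
  using n
proof (induction n rule: nat_induct_at_least)
  case base
  show ?case using H1[of mu "Suc j"] Tl_1[of j] Acoef_nonneg[of "Suc j"] hs_ge1[of 1] by simp
next
  case (Suc n)
  define r where "r = real (Suc (Suc j))"
  define c where "c = 2 * r^2 * (r + 1)"
  define F :: real where "F = fact (Suc (Suc j))"
  define P where "P = pochhammer (real n + 1) (Suc (Suc j))"
  have c0: "0 \<le> c" "0 \<le> r" by (auto simp: c_def r_def)
  have p0: "0 < P" unfolding P_def by (rule poch_pos1)
  have h1: "1 \<le> hs n" using hs_ge1 Suc by simp
  have s1: "Hm mu (Suc (Suc j)) (Suc n) \<le> Hm mu (Suc (Suc j)) n + F * (2 * mu + r * mu^2) / P
      + c * mu * (Hm mu (Suc j) n / (real n + 1))"
    using H_up_step0[OF mu, of n "Suc j"] Suc by (simp add: r_def c_def F_def P_def)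
  have s2: "Hm mu (Suc j) n \<le> Acoef (Suc j) * mu * hs n ^ Suc j" using H_bound[OF mu, of n j] Suc by simp
  have s3: "c * mu * (Hm mu (Suc j) n / (real n + 1)) \<le> c * mu * (Acoef (Suc j) * mu * hs n ^ Suc j / (real n + 1))"
    using s2 c0 mu by (intro mult_left_mono divide_right_mono) auto
  have s4: "F * Tl j (Suc n) = F * Tl j n + F / P" unfolding Tl_step P_def by (simp add: algebra_simps)
  have s5: "hs n ^ Suc (Suc j) + hs n ^ Suc j / (real n + 1) \<le> hs (Suc n) ^ Suc (Suc j)"
    using hs_pow_step[of n "Suc j"] Suc by (simp add: add.commute)
  have s6: "c * Acoef (Suc j) * mu^2 * (hs n ^ Suc (Suc j) + hs n ^ Suc j / (real n + 1)) \<le> c * Acoef (Suc j) * mu^2 * hs (Suc n) ^ Suc (Suc j)"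
    using s5 c0 Acoef_nonneg[of "Suc j"] by (intro mult_left_mono) auto
  have IH: "Hm mu (Suc (Suc j)) n \<le> (2 * mu + r * mu^2) * (F * Tl j n) + c * Acoef (Suc j) * mu^2 * hs n ^ Suc (Suc j)"
    using Suc.IH by (simp add: r_def c_def F_def)
  have e: "(2 * mu + r * mu^2) * (F * Tl j n) + c * Acoef (Suc j) * mu^2 * hs n ^ Suc (Suc j) + F * (2 * mu + r * mu^2) / P
     + c * mu * (Acoef (Suc j) * mu * hs n ^ Suc j / (real n + 1))
     = (2 * mu + r * mu^2) * (F * Tl j (Suc n)) + c * Acoef (Suc j) * mu^2 * (hs n ^ Suc (Suc j) + hs n ^ Suc j / (real n + 1))"
    unfolding s4 by (simp add: algebra_simps power2_eq_square add_divide_distrib)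
  have "Hm mu (Suc (Suc j)) (Suc n) \<le> (2 * mu + r * mu^2) * (F * Tl j (Suc n)) + c * Acoef (Suc j) * mu^2 * hs (Suc n) ^ Suc (Suc j)"
    using s1 s3 IH e s6 by linarith
  thus ?case by (simp add: r_def c_def F_def)
qed

lemma fact_n_poch: "fact (Suc (Suc j)) * real n / pochhammer (real n + 1) (Suc (Suc j)) \<le> real (Suc (Suc j))^2 / (real n + 1)"
proof -
  define x where "x = real n + 1"
  have x1: "1 \<le> x" by (simp add: x_def)
  have "pochhammer x (Suc (Suc j)) = x * pochhammer (x + 1) (Suc j)" by (rule pochhammer_rec)
  also have "pochhammer (x + 1) (Suc j) = (x + 1) * pochhammer (x + 1 + 1) j" by (rule pochhammer_rec)
  finally have pe: "pochhammer x (Suc (Suc j)) = x * ((x + 1) * pochhammer (x + 1 + 1) j)" .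
  have fj: "fact j \<le> pochhammer (x + 1 + 1) j" using x1 by (intro poch_fact_le) auto
  have pge: "x * (x + 1) * fact j \<le> pochhammer x (Suc (Suc j))"
    unfolding pe using fj x1 by (simp add: mult_left_mono)
  have p0: "0 < pochhammer x (Suc (Suc j))" unfolding x_def by (rule poch_pos1)
  have fe: "fact (Suc (Suc j)) = (real j + 2) * (real j + 1) * (fact j :: real)" by (simp add: algebra_simps)
  have "fact (Suc (Suc j)) * real n * x = (real j + 2) * (real j + 1) * real n * (x * fact j)"
    unfolding fe by (simp add: algebra_simps)
  also have "\<dots> \<le> (real j + 2) * (real j + 2) * (x + 1) * (x * fact j)"
    using x1 by (intro mult_right_mono mult_mono) (auto simp: x_def)
  also have "\<dots> = real (Suc (Suc j))^2 * (x * (x + 1) * fact j)" by (simp add: algebra_simps power2_eq_square)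
  also have "\<dots> \<le> real (Suc (Suc j))^2 * pochhammer x (Suc (Suc j))" using pge by (intro mult_left_mono) auto
  finally have "fact (Suc (Suc j)) * real n * x \<le> real (Suc (Suc j))^2 * pochhammer x (Suc (Suc j))" .
  hence "fact (Suc (Suc j)) * real n / pochhammer x (Suc (Suc j)) \<le> real (Suc (Suc j))^2 / x"
    using p0 x1 by (simp add: divide_simps)
  thus ?thesis by (simp add: x_def)
qed

lemma H_lo_asym:
  assumes mu: "0 \<le> mu" "mu \<le> 1" and n: "1 \<le> n"
  shows "Hm mu (Suc (Suc j)) n \<ge> 2 * mu * (fact (Suc (Suc j)) * Tl j n)
      - (2 * real (Suc (Suc j))^2 * Acoef 1 + 2 * real (Suc (Suc j)) * Acoef (Suc (Suc j))) * mu^2 * hs n ^ Suc (Suc (Suc j))"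
  using n
proof (induction n rule: nat_induct_at_least)
  case base
  have "0 \<le> (2 * real (Suc (Suc j))^2 * Acoef 1 + 2 * real (Suc (Suc j)) * Acoef (Suc (Suc j))) * mu^2 * hs 1 ^ Suc (Suc (Suc j))"
    using Acoef_nonneg[of 1] Acoef_nonneg[of "Suc (Suc j)"] hs_ge1[of 1] by (intro mult_nonneg_nonneg add_nonneg_nonneg) auto
  then show ?case using H1[of mu "Suc j"] Tl_1[of j] by simp
next
  case (Suc n)
  define r where "r = real (Suc (Suc j))"
  define c2 where "c2 = 2 * r^2 * Acoef 1 + 2 * r * Acoef (Suc (Suc j))"
  define F :: real where "F = fact (Suc (Suc j))"
  define P where "P = pochhammer (real n + 1) (Suc (Suc j))"
  define h where "h = hs n"
  have c0: "0 \<le> c2" "0 \<le> r" using Acoef_nonneg[of 1] Acoef_nonneg[of "Suc (Suc j)"] by (auto simp: c2_def r_def)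
  have p0: "0 < P" unfolding P_def by (rule poch_pos1)
  have h1: "1 \<le> h" using hs_ge1 Suc by (simp add: h_def)
  have n0: "0 < real n" using Suc by simp
  have s1: "Hm mu (Suc (Suc j)) (Suc n) \<ge> Hm mu (Suc (Suc j)) n + 2 * mu * F / P
      - 2 * mu * (F * Gm mu 1 n / P) - 2 * mu * r * (Hm mu (Suc (Suc j)) n / (real n + 1))"
    using H_lo_step[OF mu, of n "Suc j"] Suc by (simp add: r_def F_def P_def)
  have g1: "Gm mu 1 n = real n * Hm mu 1 n" using n0 by (simp add: Hm_def)
  have hb1: "Hm mu 1 n \<le> Acoef 1 * mu * h" using H_bound[OF mu, of n 0] Suc by (simp add: h_def)
  have hbr: "Hm mu (Suc (Suc j)) n \<le> Acoef (Suc (Suc j)) * mu * h ^ Suc (Suc j)"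
    using H_bound[OF mu, of n "Suc j"] Suc by (simp add: h_def)
  have hpow: "h \<le> h ^ Suc (Suc j)" using power_increasing[of 1 "Suc (Suc j)" h] h1 by simp
  have fnp: "F * real n / P \<le> r^2 / (real n + 1)" using fact_n_poch[of j n] by (simp add: F_def P_def r_def)
  have H1nn: "0 \<le> Hm mu 1 n" using H_nonneg mu by simp
  have t1: "F * Gm mu 1 n / P \<le> r^2 * Acoef 1 * mu * h ^ Suc (Suc j) / (real n + 1)"
  proof -
    have "F * Gm mu 1 n / P = (F * real n / P) * Hm mu 1 n" unfolding g1 by (simp add: algebra_simps)
    also have "\<dots> \<le> (r^2 / (real n + 1)) * (Acoef 1 * mu * h ^ Suc (Suc j))"
    proof (intro mult_mono)
      have "Acoef 1 * mu * h \<le> Acoef 1 * mu * h ^ Suc (Suc j)"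
        using hpow mu Acoef_nonneg[of 1] by (intro mult_left_mono) auto
      thus "Hm mu 1 n \<le> Acoef 1 * mu * h ^ Suc (Suc j)" using hb1 by linarith
    qed (use fnp H1nn c0 in auto)
    finally show ?thesis by simp
  qed
  have t2: "Hm mu (Suc (Suc j)) n / (real n + 1) \<le> Acoef (Suc (Suc j)) * mu * h ^ Suc (Suc j) / (real n + 1)"
    using hbr by (intro divide_right_mono) auto
  have s4: "F * Tl j (Suc n) = F * Tl j n + F / P" unfolding Tl_step P_def by (simp add: algebra_simps)
  have s5: "h ^ Suc (Suc (Suc j)) + h ^ Suc (Suc j) / (real n + 1) \<le> hs (Suc n) ^ Suc (Suc (Suc j))"
    using hs_pow_step[of n "Suc (Suc j)"] Suc by (simp add: add.commute h_def)
  have s6: "c2 * mu^2 * (h ^ Suc (Suc (Suc j)) + h ^ Suc (Suc j) / (real n + 1)) \<le> c2 * mu^2 * hs (Suc n) ^ Suc (Suc (Suc j))"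
    using s5 c0 by (intro mult_left_mono) auto
  have IH: "Hm mu (Suc (Suc j)) n \<ge> 2 * mu * (F * Tl j n) - c2 * mu^2 * h ^ Suc (Suc (Suc j))"
    using Suc.IH by (simp add: r_def c2_def F_def h_def)
  have m1: "2 * mu * (F * Gm mu 1 n / P) \<le> 2 * mu * (r^2 * Acoef 1 * mu * h ^ Suc (Suc j) / (real n + 1))"
    using t1 mu by (intro mult_left_mono) auto
  have m2: "2 * mu * r * (Hm mu (Suc (Suc j)) n / (real n + 1)) \<le> 2 * mu * r * (Acoef (Suc (Suc j)) * mu * h ^ Suc (Suc j) / (real n + 1))"
    using t2 mu c0 by (intro mult_left_mono) auto
  have e: "2 * mu * (F * Tl j n) - c2 * mu^2 * h ^ Suc (Suc (Suc j)) + 2 * mu * F / P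
      - 2 * mu * (r^2 * Acoef 1 * mu * h ^ Suc (Suc j) / (real n + 1))
      - 2 * mu * r * (Acoef (Suc (Suc j)) * mu * h ^ Suc (Suc j) / (real n + 1))
    = 2 * mu * (F * Tl j (Suc n)) - c2 * mu^2 * (h ^ Suc (Suc (Suc j)) + h ^ Suc (Suc j) / (real n + 1))"
    unfolding s4 c2_def by (simp add: algebra_simps power2_eq_square add_divide_distrib diff_divide_distrib)
  have "Hm mu (Suc (Suc j)) (Suc n) \<ge> 2 * mu * (F * Tl j (Suc n)) - c2 * mu^2 * hs (Suc n) ^ Suc (Suc (Suc j))"
    using s1 IH m1 m2 e s6 by linarith
  thus ?case by (simp add: r_def c2_def F_def)
qed

definition Mr :: "real \<Rightarrow> nat \<Rightarrow> nat \<Rightarrow> real" where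
  "Mr mu r n = E mu n (\<lambda>b. (real b / real n) ^ r)"

lemma Mr_eq: assumes mu: "0 \<le> mu" "mu \<le> 1"
  shows "Mr mu r n = (1 / real n ^ r) * E mu n (\<lambda>b. real b ^ r)"
proof -
  have "Mr mu r n = E mu n (\<lambda>b. (1 / real n ^ r) * real b ^ r)"
    unfolding Mr_def by (simp add: power_divide)
  also have "\<dots> = (1 / real n ^ r) * E mu n (\<lambda>b. real b ^ r)" by (rule E_cmult[OF mu])
  finally show ?thesis .
qed

lemma Mr_upper:
  assumes mu: "0 \<le> mu" "mu \<le> 1" and n: "1 \<le> n"
  shows "Mr mu (Suc k) n \<le> Hm mu (Suc k) n * (1 + real (Suc k)^2 * real k ^ k / real n)"
proof -
  have n0: "0 < real n" using n by simp
  have pn: "0 < pochhammer (real n) (Suc k)" using poch_pos n by simp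
  have i1: "E mu n (\<lambda>b. real b ^ Suc k) \<le> Gm mu (Suc k) n"
    unfolding Gm_def using mu poch_pow[of "real _" "Suc k"] by (intro E_mono) auto
  have e2: "Gm mu (Suc k) n = Hm mu (Suc k) n * pochhammer (real n) (Suc k)" using pn by (simp add: Hm_def)
  have i2: "pochhammer (real n) (Suc k) \<le> real n ^ Suc k + real (Suc k)^2 * pochhammer (real n) k"
    using poch_pow[of "real n" "Suc k"] by simp
  have i3: "pochhammer (real n) k \<le> (real n * real k) ^ k" using n by (intro poch_le_pow) auto
  have i4: "pochhammer (real n) (Suc k) \<le> real n ^ Suc k + real (Suc k)^2 * (real n * real k) ^ k"
  proof -
    have "real (Suc k)^2 * pochhammer (real n) k \<le> real (Suc k)^2 * (real n * real k) ^ k"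
      using i3 by (intro mult_left_mono) auto
    thus ?thesis using i2 by linarith
  qed
  have hn: "0 \<le> Hm mu (Suc k) n" using H_nonneg[OF mu] by simp
  have "Gm mu (Suc k) n \<le> Hm mu (Suc k) n * (real n ^ Suc k + real (Suc k)^2 * (real n * real k) ^ k)"
    unfolding e2 using i4 hn by (intro mult_left_mono) auto
  hence "E mu n (\<lambda>b. real b ^ Suc k) \<le> Hm mu (Suc k) n * (real n ^ Suc k + real (Suc k)^2 * (real n * real k) ^ k)"
    using i1 by linarith
  hence "Mr mu (Suc k) n \<le> (1 / real n ^ Suc k) * (Hm mu (Suc k) n * (real n ^ Suc k + real (Suc k)^2 * (real n * real k) ^ k))"
    unfolding Mr_eq[OF mu] using n0 by (intro mult_left_mono) auto
  also have "\<dots> = Hm mu (Suc k) n * (1 + real (Suc k)^2 * real k ^ k / real n)"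
    using n0 by (simp add: field_simps power_mult_distrib)
  finally show ?thesis .
qed

lemma Mr_lower:
  assumes mu: "0 \<le> mu" "mu \<le> 1" and n: "1 \<le> n"
  shows "Mr mu (Suc k) n \<ge> Hm mu (Suc k) n - real (Suc k)^2 * real k ^ k * Hm mu k n / real n"
proof -
  have n0: "0 < real n" using n by simp
  have pn: "0 < pochhammer (real n) (Suc k)" using poch_pos n by simp
  have pk: "0 < pochhammer (real n) k" using poch_pos n by simp
  have i1: "E mu n (\<lambda>b. real b ^ Suc k) \<ge> E mu n (\<lambda>b. pochhammer (real b) (Suc k) - real (Suc k)^2 * pochhammer (real b) k)"
  proof (intro E_mono[OF mu])
    fix b
    have "0 \<le> pochhammer (real b) (Suc k) - real b ^ Suc k \<and> pochhammer (real b) (Suc k) - real b ^ Suc k \<le> real (Suc k)^2 * pochhammer (real b) k"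
      using poch_pow[of "real b" "Suc k"] by simp
    then show "pochhammer (real b) (Suc k) - real (Suc k)^2 * pochhammer (real b) k \<le> real b ^ Suc k" by linarith
  qed
  have e1: "E mu n (\<lambda>b. pochhammer (real b) (Suc k) - real (Suc k)^2 * pochhammer (real b) k)
     = Gm mu (Suc k) n - real (Suc k)^2 * Gm mu k n"
    unfolding Gm_def by (simp add: E_diff[OF mu] E_cmult[OF mu])
  have e2: "Gm mu (Suc k) n = Hm mu (Suc k) n * pochhammer (real n) (Suc k)" using pn by (simp add: Hm_def)
  have e3: "Gm mu k n = Hm mu k n * pochhammer (real n) k" using pk by (simp add: Hm_def)
  have hn: "0 \<le> Hm mu (Suc k) n" "0 \<le> Hm mu k n" using H_nonneg[OF mu] by auto
  have i2: "real n ^ Suc k \<le> pochhammer (real n) (Suc k)" using poch_pow[of "real n" "Suc k"] by simp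
  have i3: "pochhammer (real n) k \<le> (real n * real k) ^ k" using n by (intro poch_le_pow) auto
  have a: "(1 / real n ^ Suc k) * (Hm mu (Suc k) n * pochhammer (real n) (Suc k)) \<ge> Hm mu (Suc k) n"
  proof -
    have "Hm mu (Suc k) n * real n ^ Suc k \<le> Hm mu (Suc k) n * pochhammer (real n) (Suc k)"
      using i2 hn by (intro mult_left_mono) auto
    thus ?thesis using n0 by (simp add: field_simps)
  qed
  have b: "(1 / real n ^ Suc k) * (real (Suc k)^2 * (Hm mu k n * pochhammer (real n) k))
      \<le> (1 / real n ^ Suc k) * (real (Suc k)^2 * (Hm mu k n * (real n * real k) ^ k))"
    using i3 hn n0 by (intro mult_left_mono) auto
  have c: "(1 / real n ^ Suc k) * (real (Suc k)^2 * (Hm mu k n * (real n * real k) ^ k))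
      = real (Suc k)^2 * real k ^ k * Hm mu k n / real n"
    using n0 by (simp add: field_simps power_mult_distrib)
  have "Mr mu (Suc k) n \<ge> (1 / real n ^ Suc k) * (Gm mu (Suc k) n - real (Suc k)^2 * Gm mu k n)"
    unfolding Mr_eq[OF mu] using i1 e1 n0 by (intro mult_left_mono) auto
  also have "(1 / real n ^ Suc k) * (Gm mu (Suc k) n - real (Suc k)^2 * Gm mu k n)
     = (1 / real n ^ Suc k) * (Hm mu (Suc k) n * pochhammer (real n) (Suc k))
       - (1 / real n ^ Suc k) * (real (Suc k)^2 * (Hm mu k n * pochhammer (real n) k))"
    unfolding e2 e3 by (simp add: algebra_simps)
  finally show ?thesis using a b c by linarith
qed

definition Kc :: "nat \<Rightarrow> real" where
  "Kc j = (let r = real (Suc (Suc j)); Q = r^2 * real (Suc j) ^ Suc j in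
     r + 2 * r^2 * (r + 1) * Acoef (Suc j) + Q * Acoef (Suc (Suc j)) + 2 * fact (Suc (Suc j))
     + (2 * r^2 * Acoef 1 + 2 * r * Acoef (Suc (Suc j))) + Q * Acoef (Suc j))"

declare Acoef.simps[simp del]

lemma aux_div: "0 \<le> (Q::real) \<Longrightarrow> 0 < n \<Longrightarrow> x \<le> Aa * mu * y \<Longrightarrow> Q * x / n \<le> Q * Aa * (mu * y / n)"
proof -
  assume a: "0 \<le> Q" "0 < n" "x \<le> Aa * mu * y"
  have "Q * x \<le> Q * (Aa * mu * y)" using a by (intro mult_left_mono) auto
  hence "Q * x / n \<le> Q * (Aa * mu * y) / n" using a by (intro divide_right_mono) auto
  thus ?thesis by (simp add: algebra_simps)
qed

lemma Mr_asym:
  assumes mu: "0 \<le> mu" "mu \<le> 1" and n: "1 \<le> n"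
  shows "\<bar>Mr mu (Suc (Suc j)) n - 2 * mu / real (Suc j)\<bar> \<le> Kc j * (mu * (mu + 1 / real n) * hs n ^ Suc (Suc (Suc j)))"
proof -
  define r where "r = real (Suc (Suc j))"
  define Q where "Q = r^2 * real (Suc j) ^ Suc j"
  define F :: real where "F = fact (Suc (Suc j))"
  define c1 where "c1 = 2 * r^2 * (r + 1) * Acoef (Suc j)"
  define c2 where "c2 = 2 * r^2 * Acoef 1 + 2 * r * Acoef (Suc (Suc j))"
  define h where "h = hs n"
  define X where "X = mu * (mu + 1 / real n) * h ^ Suc (Suc (Suc j))"
  have n0: "0 < real n" using n by simp
  have h1: "1 \<le> h" using hs_ge1 n by (simp add: h_def)
  have hp: "\<And>a. a \<le> Suc (Suc (Suc j)) \<Longrightarrow> h ^ a \<le> h ^ Suc (Suc (Suc j))"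
    using h1 by (intro power_increasing) auto
  have hp0: "\<And>a. 0 \<le> h ^ a" using h1 by simp
  have X1: "\<And>a. a \<le> Suc (Suc (Suc j)) \<Longrightarrow> mu^2 * h ^ a \<le> X"
  proof -
    fix a assume a: "a \<le> Suc (Suc (Suc j))"
    have "mu^2 * h ^ a \<le> mu * (mu + 1 / real n) * h ^ a"
      using mu n0 hp0[of a] by (intro mult_right_mono) (auto simp: power2_eq_square algebra_simps)
    also have "\<dots> \<le> X" unfolding X_def using hp[OF a] mu n0 by (intro mult_left_mono) auto
    finally show "mu^2 * h ^ a \<le> X" .
  qed
  have X2: "\<And>a. a \<le> Suc (Suc (Suc j)) \<Longrightarrow> mu * h ^ a / real n \<le> X"
  proof -
    fix a assume a: "a \<le> Suc (Suc (Suc j))"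
    have "mu * h ^ a / real n \<le> mu * (mu + 1 / real n) * h ^ a"
      using mu n0 hp0[of a] by (simp add: field_simps mult_right_mono)
    also have "\<dots> \<le> X" unfolding X_def using hp[OF a] mu n0 by (intro mult_left_mono) auto
    finally show "mu * h ^ a / real n \<le> X" .
  qed
  have X3: "mu / (real n + 1) \<le> X"
  proof -
    have "mu / (real n + 1) \<le> mu * h ^ 0 / real n" using mu n0 by (simp add: frac_le)
    thus ?thesis using X2[of 0] by simp
  qed
  have Xnn: "0 \<le> X" unfolding X_def using mu n0 hp0[of "Suc (Suc (Suc j))"] by (intro mult_nonneg_nonneg) auto
  have c0: "0 \<le> r" "0 \<le> Q" "0 \<le> c1" "0 \<le> c2" "0 \<le> F"
    using Acoef_nonneg[of 1] Acoef_nonneg[of "Suc j"] Acoef_nonneg[of "Suc (Suc j)"]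
    by (auto simp: r_def Q_def c1_def c2_def F_def)
  have Ar: "Hm mu (Suc (Suc j)) n \<le> Acoef (Suc (Suc j)) * mu * h ^ Suc (Suc j)"
    using H_bound[OF mu n, of "Suc j"] by (simp add: h_def)
  have Ar1: "Hm mu (Suc j) n \<le> Acoef (Suc j) * mu * h ^ Suc j"
    using H_bound[OF mu n, of j] by (simp add: h_def)
  have u1: "Mr mu (Suc (Suc j)) n \<le> Hm mu (Suc (Suc j)) n + Q * Hm mu (Suc (Suc j)) n / real n"
    using Mr_upper[OF mu n, of "Suc j"] by (simp add: Q_def r_def algebra_simps)
  have u2: "Hm mu (Suc (Suc j)) n \<le> (2 * mu + r * mu^2) * (F * Tl j n) + c1 * mu^2 * h ^ Suc (Suc j)"
    using H_up_asym[OF mu n, of j] by (simp add: r_def F_def c1_def h_def)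
  have u3: "(2 * mu + r * mu^2) * (F * Tl j n) \<le> (2 * mu + r * mu^2) * (1 / real (Suc j))"
    using Tl_upper[of j n] mu c0 by (intro mult_left_mono) (auto simp: F_def)
  have u4: "(2 * mu + r * mu^2) * (1 / real (Suc j)) \<le> 2 * mu / real (Suc j) + r * mu^2"
  proof -
    have "r * mu^2 * (1 / real (Suc j)) \<le> r * mu^2 * 1" using c0 by (intro mult_left_mono) auto
    thus ?thesis by (simp add: algebra_simps)
  qed
  have u5: "Q * Hm mu (Suc (Suc j)) n / real n \<le> Q * Acoef (Suc (Suc j)) * (mu * h ^ Suc (Suc j) / real n)"
    using Ar c0 n0 by (intro aux_div) auto
  have u6: "r * mu^2 \<le> r * X" using X1[of 0] c0 by (intro mult_left_mono) auto
  have u7: "c1 * mu^2 * h ^ Suc (Suc j) \<le> c1 * X" using X1[of "Suc (Suc j)"] c0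
    by (simp add: mult_left_mono mult.assoc)
  have u8: "Q * Acoef (Suc (Suc j)) * (mu * h ^ Suc (Suc j) / real n) \<le> Q * Acoef (Suc (Suc j)) * X"
    using X2[of "Suc (Suc j)"] c0 Acoef_nonneg[of "Suc (Suc j)"] by (intro mult_left_mono) auto
  have up: "Mr mu (Suc (Suc j)) n - 2 * mu / real (Suc j) \<le> (r + c1 + Q * Acoef (Suc (Suc j))) * X"
    using u1 u2 u3 u4 u5 u6 u7 u8 by (simp add: algebra_simps)
  have l1: "Mr mu (Suc (Suc j)) n \<ge> Hm mu (Suc (Suc j)) n - Q * Hm mu (Suc j) n / real n"
    using Mr_lower[OF mu n, of "Suc j"] by (simp add: Q_def r_def algebra_simps)
  have l2: "Hm mu (Suc (Suc j)) n \<ge> 2 * mu * (F * Tl j n) - c2 * mu^2 * h ^ Suc (Suc (Suc j))"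
    using H_lo_asym[OF mu n, of j] by (simp add: r_def F_def c2_def h_def)
  have l3: "2 * mu * (F * Tl j n) \<ge> 2 * mu * (1 / real (Suc j) - F / (real n + 1))"
    using Tl_lower[of j n] mu by (intro mult_left_mono) (auto simp: F_def)
  have l4: "2 * mu * (1 / real (Suc j) - F / (real n + 1)) = 2 * mu / real (Suc j) - 2 * F * (mu / (real n + 1))"
    by (simp add: algebra_simps)
  have l5: "2 * F * (mu / (real n + 1)) \<le> 2 * F * X" using X3 c0 by (intro mult_left_mono) auto
  have l6: "c2 * mu^2 * h ^ Suc (Suc (Suc j)) \<le> c2 * X" using X1[of "Suc (Suc (Suc j))"] c0
    by (simp add: mult_left_mono mult.assoc)
  have l7: "Q * Hm mu (Suc j) n / real n \<le> Q * Acoef (Suc j) * (mu * h ^ Suc j / real n)"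
    using Ar1 c0 n0 by (intro aux_div) auto
  have l8: "Q * Acoef (Suc j) * (mu * h ^ Suc j / real n) \<le> Q * Acoef (Suc j) * X"
    using X2[of "Suc j"] c0 Acoef_nonneg[of "Suc j"] by (intro mult_left_mono) auto
  have lo: "2 * mu / real (Suc j) - Mr mu (Suc (Suc j)) n \<le> (2 * F + c2 + Q * Acoef (Suc j)) * X"
    using l1 l2 l3 l4 l5 l6 l7 l8 by (simp add: algebra_simps)
  have K: "Kc j = (r + c1 + Q * Acoef (Suc (Suc j))) + (2 * F + c2 + Q * Acoef (Suc j))"
    unfolding Kc_def Let_def r_def Q_def c1_def c2_def F_def by simp
  have a1: "0 \<le> (r + c1 + Q * Acoef (Suc (Suc j))) * X"
    using c0 Xnn Acoef_nonneg[of "Suc (Suc j)"] by simp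
  have a2: "0 \<le> (2 * F + c2 + Q * Acoef (Suc j)) * X"
    using c0 Xnn Acoef_nonneg[of "Suc j"] by simp
  have "\<bar>Mr mu (Suc (Suc j)) n - 2 * mu / real (Suc j)\<bar> \<le> Kc j * X"
    unfolding K using up lo a1 a2 by (simp add: algebra_simps abs_le_iff) 
  thus ?thesis by (simp add: X_def h_def)
qed

lemma pmf_eq_bool:
  assumes "pmf p True = pmf q True" shows "p = (q :: bool pmf)"
proof (rule pmf_eqI)
  fix b :: bool show "pmf p b = pmf q b"
    using assms by (cases b) (auto simp: pmf_False_conv_True)
qed

lemma pmf_True_expectation: "pmf q True = measure_pmf.expectation q (\<lambda>b. if b then 1 else 0 :: real)"
  by (subst integral_measure_pmf[of UNIV]) (auto simp: UNIV_bool)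

lemma sum_nuc_aux:
  "(\<Sum>x\<in>{A, C, G, T} - {x0}. if x \<noteq> y then 1 else (0::real)) / real (card ({A, C, G, T} - {x0}))
     = (if x0 = y then 1 else 2/3)"
  by (cases x0; cases y) (simp_all add: insert_Diff_if)

lemma map_mutate:
  assumes "0 \<le> mu" "mu \<le> 1"
  shows "map_pmf (\<lambda>x. x \<noteq> y) (mutate mu x0) = bernoulli_pmf (if x0 = y then mu else 1 - mu/3)"
proof (rule pmf_eq_bool)
  have ne: "{A, C, G, T} - {x0} \<noteq> {}" by (cases x0) auto
  have fin: "\<And>b. finite (set_pmf (if b then pmf_of_set ({A, C, G, T} - {x0}) else return_pmf x0))"
    using ne by auto
  have "pmf (map_pmf (\<lambda>x. x \<noteq> y) (mutate mu x0)) True =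
     measure_pmf.expectation (mutate mu x0) (\<lambda>x. if x \<noteq> y then 1 else 0 :: real)"
    unfolding pmf_True_expectation by simp
  also have "\<dots> = mu * (if x0 = y then 1 else 2/3) + (1 - mu) * (if x0 = y then 0 else 1)"
    unfolding mutate_def using assms ne fin
    by (simp add: expectation_bind_finite integral_pmf_of_set sum_nuc_aux)
  also have "\<dots> = pmf (bernoulli_pmf (if x0 = y then mu else 1 - mu/3)) True"
    using assms by auto
  finally show "pmf (map_pmf (\<lambda>x. x \<noteq> y) (mutate mu x0)) True = pmf (bernoulli_pmf (if x0 = y then mu else 1 - mu/3)) True" .
qed

lemma map_daughter:
  assumes "finite S" "i \<in> S" "0 \<le> mu" "mu \<le> 1"
  shows "map_pmf (\<lambda>d. d i \<noteq> y) (daughter mu S v) = bernoulli_pmf (if v i = y then mu else 1 - mu/3)"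
proof -
  have "map_pmf (\<lambda>d. d i \<noteq> y) (daughter mu S v) = map_pmf (\<lambda>x. x \<noteq> y) (map_pmf (\<lambda>d. d i) (daughter mu S v))"
    by (simp add: pmf.map_comp o_def)
  also have "map_pmf (\<lambda>d. d i) (daughter mu S v) = mutate mu (v i)"
    unfolding daughter_def using assms by (simp add: Pi_pmf_component)
  finally show ?thesis using map_mutate assms by simp
qed

lemma Bcount_split:
  assumes "j < length cs"
  shows "Bcount u (take j cs @ [d1, d2] @ drop (Suc j) cs) i =
    Bcount u cs i - of_bool ((cs ! j) i \<noteq> u i) + of_bool (d1 i \<noteq> u i) + of_bool (d2 i \<noteq> u i)"
proof -
  define P where "P = (\<lambda>c::'a \<Rightarrow> nuc. c i \<noteq> u i)"
  have cs: "cs = take j cs @ cs ! j # drop (Suc j) cs" using assms by (simp add: id_take_nth_drop)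
  have "Bcount u cs i = length (filter P (take j cs)) + of_bool (P (cs ! j)) + length (filter P (drop (Suc j) cs))"
    unfolding Bcount_def P_def by (subst cs) simp
  moreover have "Bcount u (take j cs @ [d1, d2] @ drop (Suc j) cs) i =
     length (filter P (take j cs)) + of_bool (P d1) + of_bool (P d2) + length (filter P (drop (Suc j) cs))"
    unfolding Bcount_def P_def by simp
  ultimately show ?thesis unfolding P_def by simp
qed

lemma map_uniform_bool:
  assumes "0 < m"
  shows "map_pmf Q (pmf_of_set {..<m}) = bernoulli_pmf (real (card {j. j < m \<and> Q j}) / real m)"
proof (rule pmf_eq_bool)
  have c: "card {j. j < m \<and> Q j} \<le> m" by (rule order_trans[OF card_mono[of "{..<m}"]]) auto
  have "pmf (map_pmf Q (pmf_of_set {..<m})) True = measure_pmf.prob (pmf_of_set {..<m}) {j. Q j}"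
    by (simp add: pmf_map vimage_def)
  also have "\<dots> = real (card {j. j < m \<and> Q j}) / real m"
    using assms by (subst measure_pmf_of_set) (auto simp: Int_def)
  finally show "pmf (map_pmf Q (pmf_of_set {..<m})) True = pmf (bernoulli_pmf (real (card {j. j < m \<and> Q j}) / real m)) True"
    using assms c by simp
qed

lemma map_division:
  assumes "cs \<noteq> []" "finite S" "i \<in> S" "0 \<le> mu" "mu \<le> 1"
  shows "map_pmf (\<lambda>cs'. Bcount u cs' i) (division mu S cs) = kern mu (length cs) (Bcount u cs i)"
proof -
  define m where "m = length cs"
  define B where "B = Bcount u cs i"
  define mj where "mj = (\<lambda>j. (cs ! j) i \<noteq> u i)"
  define g where "g = (\<lambda>mt. bind_pmf (bernoulli_pmf (if mt then 1 - mu/3 else mu)) (\<lambda>x1.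
     bind_pmf (bernoulli_pmf (if mt then 1 - mu/3 else mu)) (\<lambda>x2.
     return_pmf (B - of_bool mt + of_bool x1 + of_bool x2))))"
  have m0: "0 < m" using assms by (simp add: m_def)
  have inner: "bind_pmf (daughter mu S (cs ! j)) (\<lambda>d1.
        bind_pmf (daughter mu S (cs ! j)) (\<lambda>d2. return_pmf (Bcount u (take j cs @ [d1, d2] @ drop (Suc j) cs) i)))
      = g (mj j)" if j: "j \<in> set_pmf (pmf_of_set {..<m})" for j
  proof -
    have jm: "j < length cs" using j m0 by (subst (asm) set_pmf_of_set) (auto simp: m_def)
    have p: "(if (cs ! j) i = u i then mu else 1 - mu/3) = (if mj j then 1 - mu/3 else mu)"
      by (simp add: mj_def)
    have "bind_pmf (daughter mu S (cs ! j)) (\<lambda>d1.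
        bind_pmf (daughter mu S (cs ! j)) (\<lambda>d2. return_pmf (Bcount u (take j cs @ [d1, d2] @ drop (Suc j) cs) i)))
      = bind_pmf (daughter mu S (cs ! j)) (\<lambda>d1. bind_pmf (daughter mu S (cs ! j)) (\<lambda>d2.
          return_pmf (B - of_bool (mj j) + of_bool (d1 i \<noteq> u i) + of_bool (d2 i \<noteq> u i))))"
      using jm by (simp add: map_bind_pmf Bcount_split[OF jm, simplified] B_def mj_def)
    also have "\<dots> = bind_pmf (map_pmf (\<lambda>d. d i \<noteq> u i) (daughter mu S (cs ! j))) (\<lambda>x1.
          bind_pmf (map_pmf (\<lambda>d. d i \<noteq> u i) (daughter mu S (cs ! j))) (\<lambda>x2.
          return_pmf (B - of_bool (mj j) + of_bool x1 + of_bool x2)))"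
      by (simp add: bind_map_pmf)
    also have "\<dots> = g (mj j)"
      unfolding map_daughter[OF assms(2-5)] p g_def ..
    finally show ?thesis .
  qed
  have "map_pmf (\<lambda>cs'. Bcount u cs' i) (division mu S cs) = bind_pmf (pmf_of_set {..<m}) (\<lambda>j. g (mj j))"
    unfolding division_def map_bind_pmf map_return_pmf m_def[symmetric] using inner by (intro bind_pmf_cong refl) auto
  also have "\<dots> = bind_pmf (map_pmf mj (pmf_of_set {..<m})) g" by (simp add: bind_map_pmf)
  also have "map_pmf mj (pmf_of_set {..<m}) = bernoulli_pmf (real B / real m)"
    using map_uniform_bool[OF m0, of mj] by (simp add: B_def Bcount_def length_filter_conv_card m_def mj_def)
  finally show ?thesis unfolding kern_def g_def m_def B_def .
qed

lemma set_division:
  assumes "cs \<noteq> []"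
  shows "set_pmf (division mu S cs) \<subseteq> {cs'. length cs' = Suc (length cs)}"
proof
  fix x assume "x \<in> set_pmf (division mu S cs)"
  then obtain j d1 d2 where j: "j \<in> set_pmf (pmf_of_set {..<length cs})"
    and x: "x = take j cs @ [d1, d2] @ drop (Suc j) cs"
    unfolding division_def by auto
  have "j < length cs" using j assms by (subst (asm) set_pmf_of_set) auto
  then show "x \<in> {cs'. length cs' = Suc (length cs)}" using x by auto
qed

definition pop :: "real \<Rightarrow> 'a set \<Rightarrow> ('a \<Rightarrow> nuc) \<Rightarrow> nat \<Rightarrow> ('a \<Rightarrow> nuc) list pmf" where
  "pop mu S u t = ((\<lambda>p. bind_pmf p (division mu S)) ^^ t) (return_pmf [u])"

lemma pop_Suc: "pop mu S u (Suc t) = bind_pmf (pop mu S u t) (division mu S)"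
  unfolding pop_def by simp

lemma pop_set: "set_pmf (pop mu S u t) \<subseteq> {cs. length cs = Suc t}"
proof (induction t)
  case 0 then show ?case by (simp add: pop_def)
next
  case (Suc t)
  show ?case
  proof
    fix x assume "x \<in> set_pmf (pop mu S u (Suc t))"
    then obtain cs where cs: "cs \<in> set_pmf (pop mu S u t)" and x: "x \<in> set_pmf (division mu S cs)"
      unfolding pop_Suc by auto
    have l: "length cs = Suc t" using Suc cs by auto
    hence "cs \<noteq> []" by auto
    thus "x \<in> {cs. length cs = Suc (Suc t)}" using set_division[of cs mu S] x l by auto
  qed
qed

lemma pop_map:
  assumes "finite S" "i \<in> S" "0 \<le> mu" "mu \<le> 1"
  shows "map_pmf (\<lambda>cs. Bcount u cs i) (pop mu S u t) = ch mu (Suc t)"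
proof (induction t)
  case 0 then show ?case by (simp add: pop_def Bcount_def)
next
  case (Suc t)
  have "map_pmf (\<lambda>cs. Bcount u cs i) (pop mu S u (Suc t))
      = bind_pmf (pop mu S u t) (\<lambda>cs. map_pmf (\<lambda>cs. Bcount u cs i) (division mu S cs))"
    unfolding pop_Suc map_bind_pmf ..
  also have "\<dots> = bind_pmf (pop mu S u t) (\<lambda>cs. kern mu (Suc t) (Bcount u cs i))"
  proof (intro bind_pmf_cong refl)
    fix cs assume "cs \<in> set_pmf (pop mu S u t)"
    hence l: "length cs = Suc t" using pop_set by blast
    hence "cs \<noteq> []" by auto
    thus "map_pmf (\<lambda>cs. Bcount u cs i) (division mu S cs) = kern mu (Suc t) (Bcount u cs i)"
      using map_division[OF _ assms, of cs u] l by simp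
  qed
  also have "\<dots> = bind_pmf (map_pmf (\<lambda>cs. Bcount u cs i) (pop mu S u t)) (kern mu (Suc t))"
    by (simp add: bind_map_pmf)
  also have "\<dots> = ch mu (Suc (Suc t))" unfolding Suc by simp
  finally show ?case .
qed

lemma expected_sites_eq:
  assumes "finite S" "0 \<le> mu" "mu \<le> 1" "1 \<le> n"
  shows "expected_sites n mu S u a = real (card S) * E mu n (\<lambda>b. indicator {a<..<1} (real b / real n))"
proof -
  have popn: "population n mu S u = pop mu S u (n - 1)" unfolding population_def pop_def ..
  have sn: "Suc (n - 1) = n" using assms by simp
  have "expected_sites n mu S u a = (\<Sum>i\<in>S. measure_pmf.expectation (pop mu S u (n - 1))
          (\<lambda>cs. indicator {a<..<1} (real (Bcount u cs i) / real n) :: real))"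
    unfolding expected_sites_def popn
    by (rule Bochner_Integration.integral_sum[where f="\<lambda>i cs. indicator {a<..<1} (real (Bcount u cs i) / real n) :: real"],
        rule measure_pmf.integrable_const_bound[where B=1]) (auto simp: indicator_def)
  also have "\<dots> = (\<Sum>i\<in>S. E mu n (\<lambda>b. indicator {a<..<1} (real b / real n)))"
  proof (intro sum.cong refl)
    fix i assume i: "i \<in> S"
    have "measure_pmf.expectation (pop mu S u (n - 1)) (\<lambda>cs. indicator {a<..<1} (real (Bcount u cs i) / real n) :: real)
       = measure_pmf.expectation (map_pmf (\<lambda>cs. Bcount u cs i) (pop mu S u (n - 1))) (\<lambda>b. indicator {a<..<1} (real b / real n))"
      by (simp add: integral_map_pmf)
    also have "\<dots> = E mu n (\<lambda>b. indicator {a<..<1} (real b / real n))"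
      unfolding pop_map[OF assms(1) i assms(2,3)] sn E_def ..
    finally show "measure_pmf.expectation (pop mu S u (n - 1)) (\<lambda>cs. indicator {a<..<1} (real (Bcount u cs i) / real n) :: real)
       = E mu n (\<lambda>b. indicator {a<..<1} (real b / real n))" .
  qed
  also have "\<dots> = real (card S) * E mu n (\<lambda>b. indicator {a<..<1} (real b / real n))" by simp
  finally show ?thesis .
qed

lemma poly_has_integral:
  "((\<lambda>x::real. \<Sum>i\<le>d. q i * x ^ i) has_integral (\<Sum>i\<le>d. q i / real (Suc i))) {0..1}"
proof -
  have "((\<lambda>x::real. \<Sum>i\<le>d. q i * x ^ i) has_integral
        ((\<lambda>x. \<Sum>i\<le>d. q i * x ^ Suc i / real (Suc i)) 1 - (\<lambda>x. \<Sum>i\<le>d. q i * x ^ Suc i / real (Suc i)) 0)) {0..1}"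
  proof (rule fundamental_theorem_of_calculus)
    fix x :: real assume "x \<in> {0..1}"
    show "((\<lambda>x. \<Sum>i\<le>d. q i * x ^ Suc i / real (Suc i)) has_vector_derivative (\<Sum>i\<le>d. q i * x ^ i)) (at x within {0..1})"
      unfolding has_real_derivative_iff_has_vector_derivative[symmetric]
      apply (rule derivative_eq_intros refl | simp)+
      apply (rule sum.cong, auto)
      done
  qed simp
  thus ?thesis by simp
qed

lemma inv_sq_has_integral:
  assumes "0 < c" "c \<le> d"
  shows "((\<lambda>x::real. 1 / x^2) has_integral (1/c - 1/d)) {c..d}"
proof -
  have "((\<lambda>x::real. 1 / x^2) has_integral ((\<lambda>x. - 1 / x) d - (\<lambda>x. - 1 / x) c)) {c..d}"
  proof (rule fundamental_theorem_of_calculus)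
    fix x :: real assume x: "x \<in> {c..d}"
    hence x0: "x \<noteq> 0" using assms by auto
    show "((\<lambda>x. - 1 / x) has_vector_derivative 1 / x^2) (at x within {c..d})"
      unfolding has_real_derivative_iff_has_vector_derivative[symmetric]
      using x0 by (auto intro!: derivative_eq_intros simp: power2_eq_square field_simps)
  qed (use assms in simp)
  thus ?thesis by simp
qed

definition clamp :: "real \<Rightarrow> real" where "clamp t = max 0 (min 1 t)"

lemma clamp_cont: "continuous_on S f \<Longrightarrow> continuous_on S (\<lambda>x. clamp (f x))"
  unfolding clamp_def by (intro continuous_intros) auto

lemma clamp_ge0: "0 \<le> clamp t" and clamp_le1: "clamp t \<le> 1" unfolding clamp_def by auto
lemma clamp_0: "t \<le> 0 \<Longrightarrow> clamp t = 0" and clamp_1: "1 \<le> t \<Longrightarrow> clamp t = 1"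
  unfolding clamp_def by auto

lemma poly_approx:
  assumes "continuous_on {0..1::real} f" "0 < e"
  obtains d c where "\<forall>x\<in>{0..1}. \<bar>f x - (\<Sum>i\<le>d. c i * x ^ i)\<bar> < e"
proof -
  obtain g where g: "polynomial_function g" "\<forall>x\<in>{0..1::real}. norm (f x - g x) < e"
    using Stone_Weierstrass_polynomial_function[OF compact_Icc assms(1) assms(2)] by blast
  have "real_polynomial_function g" using g(1) by (simp add: real_polynomial_function_eq)
  then obtain c d where "g = (\<lambda>x. \<Sum>i\<le>d. c i * x ^ i)" by (auto simp: real_polynomial_function_iff_sum)
  thus ?thesis using g(2) that by auto
qed

lemma sum_shift_const:
  "(\<Sum>i\<le>d. (c i + (if i = 0 then e else 0)) * (x::real) ^ i) = (\<Sum>i\<le>d. c i * x ^ i) + e"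
  "(\<Sum>i\<le>d. (c i + (if i = 0 then e else 0)) / real (Suc i)) = (\<Sum>i\<le>d. c i / real (Suc i)) + e"
  by (simp_all add: distrib_right sum.distrib add_divide_distrib if_distrib[of "\<lambda>y. y * _"] if_distrib[of "\<lambda>y. y / _"] cong: if_cong)

lemma sandwich_upper:
  assumes a: "0 < a" "a < 1" and e: "0 < \<epsilon>"
  shows "\<exists>d q. (\<forall>x\<in>{0..1}. indicator {a<..<1} x \<le> x^2 * (\<Sum>i\<le>d. q i * x ^ i))
      \<and> 2 * (\<Sum>i\<le>d. q i / real (Suc i)) \<le> 2 * (1/a - 1) + \<epsilon>"
proof -
  define \<delta> where "\<delta> = min (a/2) (a^2 * \<epsilon> / 8)"
  define a' where "a' = a - \<delta>"
  define \<eta> where "\<eta> = \<epsilon> / 8"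
  have d0: "0 < \<delta>" using a e by (simp add: \<delta>_def)
  have d1: "\<delta> \<le> a/2" "\<delta> \<le> a^2 * \<epsilon> / 8" by (auto simp: \<delta>_def)
  have a'0: "a/2 \<le> a'" "0 < a'" "a' < a" using d1 d0 a by (auto simp: a'_def)
  define \<phi> where "\<phi> = (\<lambda>x. clamp ((x - a') / \<delta>) / (max x a')^2)"
  have cont: "continuous_on {0..1} \<phi>"
    unfolding \<phi>_def using a'0 d0
    by (intro continuous_intros clamp_cont) (auto simp: max_def)
  have \<phi>0: "\<And>x. 0 \<le> \<phi> x" unfolding \<phi>_def using clamp_ge0 by simp
  have \<phi>a: "\<And>x. a \<le> x \<Longrightarrow> \<phi> x = 1 / x^2"
  proof -
    fix x assume x: "a \<le> x"
    have "1 \<le> (x - a') / \<delta>" using x d0 by (simp add: a'_def field_simps)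
    moreover have "max x a' = x" using x a'0 by simp
    ultimately show "\<phi> x = 1 / x^2" unfolding \<phi>_def by (simp add: clamp_1)
  qed
  have \<phi>lo: "\<And>x. x \<le> a' \<Longrightarrow> \<phi> x = 0"
  proof -
    fix x assume "x \<le> a'"
    hence "(x - a') / \<delta> \<le> 0" using d0 by (simp add: divide_nonpos_pos)
    thus "\<phi> x = 0" unfolding \<phi>_def by (simp add: clamp_0)
  qed
  have \<phi>hi: "\<And>x. a' \<le> x \<Longrightarrow> \<phi> x \<le> 1 / x^2"
  proof -
    fix x assume x: "a' \<le> x"
    hence "max x a' = x" by simp
    thus "\<phi> x \<le> 1 / x^2" unfolding \<phi>_def using clamp_le1 x a'0 by (simp add: divide_right_mono)
  qed
  have eta0: "0 < \<eta>" using e by (simp add: \<eta>_def)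
  obtain d c where approx: "\<forall>x\<in>{0..1}. \<bar>\<phi> x - (\<Sum>i\<le>d. c i * x ^ i)\<bar> < \<eta>"
    using poly_approx[OF cont eta0] by blast
  define q where "q = (\<lambda>i. c i + (if i = 0 then \<eta> else 0))"
  define g where "g = (\<lambda>x::real. \<Sum>i\<le>d. c i * x ^ i)"
  have Q: "\<And>x. (\<Sum>i\<le>d. q i * x ^ i) = g x + \<eta>" unfolding q_def g_def by (rule sum_shift_const)
  have Qs: "(\<Sum>i\<le>d. q i / real (Suc i)) = (\<Sum>i\<le>d. c i / real (Suc i)) + \<eta>" unfolding q_def by (rule sum_shift_const)
  have g1: "\<And>x. x \<in> {0..1} \<Longrightarrow> \<phi> x \<le> g x + \<eta>" and g2: "\<And>x. x \<in> {0..1} \<Longrightarrow> g x \<le> \<phi> x + \<eta>"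
  proof -
    fix x :: real assume x: "x \<in> {0..1}"
    have "\<bar>\<phi> x - g x\<bar> < \<eta>" using approx x unfolding g_def by blast
    thus "\<phi> x \<le> g x + \<eta>" by (simp add: abs_less_iff)
  next
    fix x :: real assume x: "x \<in> {0..1}"
    have "\<bar>\<phi> x - g x\<bar> < \<eta>" using approx x unfolding g_def by blast
    thus "g x \<le> \<phi> x + \<eta>" by (simp add: abs_less_iff)
  qed
  have pw: "\<forall>x\<in>{0..1}. indicator {a<..<1} x \<le> x^2 * (\<Sum>i\<le>d. q i * x ^ i)"
  proof
    fix x :: real assume x: "x \<in> {0..1}"
    show "indicator {a<..<1} x \<le> x^2 * (\<Sum>i\<le>d. q i * x ^ i)"
    proof (cases "x \<in> {a<..<1}")
      case True
      hence "\<phi> x = 1 / x^2" using \<phi>a by auto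
      moreover have "0 < x" using True a by auto
      ultimately have "x^2 * \<phi> x = 1" by simp
      moreover have "x^2 * \<phi> x \<le> x^2 * (g x + \<eta>)" using g1[OF x] by (intro mult_left_mono) auto
      ultimately show ?thesis using True Q by simp
    next
      case False
      have "0 \<le> x^2 * (g x + \<eta>)" using g1[OF x] \<phi>0[of x] by simp
      thus ?thesis using False Q by simp
    qed
  qed
  have ig: "(g has_integral (\<Sum>i\<le>d. c i / real (Suc i))) {0..1}" unfolding g_def by (rule poly_has_integral)
  have cont_g: "continuous_on {0..1} g" unfolding g_def by (intro continuous_intros)
  have int\<phi>: "\<phi> integrable_on {0..1}" using cont by (rule integrable_continuous_real)
  have "(\<Sum>i\<le>d. c i / real (Suc i)) = integral {0..1} g" using ig by (simp add: integral_unique)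
  also have "\<dots> \<le> integral {0..1} (\<lambda>x. \<phi> x + \<eta>)"
    using g2 int\<phi> ig by (intro integral_le) (auto intro!: integrable_add)
  also have "\<dots> = integral {0..1} \<phi> + \<eta>"
  proof -
    have "integral {0..1} (\<lambda>x. \<phi> x + \<eta>) = integral {0..1} \<phi> + integral {0..1} (\<lambda>x::real. \<eta>)"
      by (rule integral_add[OF int\<phi>]) (rule integrable_const_ivl)
    thus ?thesis by simp
  qed
  also have "integral {0..1} \<phi> = integral {0..a'} \<phi> + integral {a'..1} \<phi>"
    using Henstock_Kurzweil_Integration.integral_combine[where a=0 and c=a' and b=1 and f=\<phi>] a'0 a int\<phi> by simp
  also have "integral {0..a'} \<phi> = 0"
  proof -
    have "integral {0..a'} \<phi> = integral {0..a'} (\<lambda>x. 0)" using \<phi>lo by (intro integral_cong) auto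
    thus ?thesis by simp
  qed
  also have "integral {a'..1} \<phi> \<le> integral {a'..1} (\<lambda>x. 1 / x^2)"
  proof (intro integral_le)
    show "\<phi> integrable_on {a'..1}" using a'0 by (intro integrable_continuous_real continuous_on_subset[OF cont]) auto
    show "(\<lambda>x. 1 / x^2) integrable_on {a'..1}" using inv_sq_has_integral[of a' 1] a'0 a unfolding integrable_on_def by auto
  qed (use \<phi>hi in auto)
  also have "integral {a'..1} (\<lambda>x::real. 1 / x^2) = 1/a' - 1"
    using inv_sq_has_integral[of a' 1] a'0 a by (simp add: integral_unique)
  finally have I: "(\<Sum>i\<le>d. c i / real (Suc i)) \<le> 1/a' - 1 + \<eta>" by simp
  have "1/a' - 1/a = \<delta> / (a * a')" using a'0 a by (simp add: a'_def field_simps)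
  also have "\<dots> \<le> \<delta> / (a * (a/2))" using a'0 a d0 by (intro divide_left_mono mult_left_mono mult_pos_pos) auto
  also have "\<dots> \<le> (a^2 * \<epsilon> / 8) / (a * (a/2))" using d1 a by (intro divide_right_mono) auto
  also have "\<dots> = \<epsilon> / 4" using a by (simp add: power2_eq_square field_simps)
  finally have "1/a' \<le> 1/a + \<epsilon>/4" by simp
  hence "2 * (\<Sum>i\<le>d. q i / real (Suc i)) \<le> 2 * (1/a - 1) + \<epsilon>"
    using I unfolding Qs \<eta>_def by simp
  thus ?thesis using pw by blast
qed

lemma sandwich_lower:
  assumes a: "0 < a" "a < 1" and e: "0 < \<epsilon>"
  shows "\<exists>d q. (\<forall>x\<in>{0..1}. x^2 * (\<Sum>i\<le>d. q i * x ^ i) \<le> indicator {a<..<1} x)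
      \<and> 2 * (1/a - 1) - \<epsilon> \<le> 2 * (\<Sum>i\<le>d. q i / real (Suc i))"
proof -
  define \<delta> where "\<delta> = min ((1 - a)/4) (min (a^2 * \<epsilon> / 16) (\<epsilon> / 16))"
  define \<eta> where "\<eta> = \<epsilon> / 8"
  have d0: "0 < \<delta>" using a e by (simp add: \<delta>_def)
  have d1: "\<delta> \<le> (1 - a)/4" "\<delta> \<le> a^2 * \<epsilon> / 16" "\<delta> \<le> \<epsilon> / 16" unfolding \<delta>_def by (rule min.cobounded1, rule order_trans[OF min.cobounded2 min.cobounded1], rule order_trans[OF min.cobounded2 min.cobounded2])
  have ad: "a + \<delta> \<le> 1 - \<delta>" "1 - \<delta> \<le> 1" "0 \<le> a + \<delta>" "\<delta> \<le> 1/4" using d1 d0 a by auto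
  define \<phi> where "\<phi> = (\<lambda>x. min (clamp ((x - a) / \<delta>)) (clamp ((1 - x) / \<delta>)) / (max x a)^2)"
  have cont: "continuous_on {0..1} \<phi>"
    unfolding \<phi>_def using a d0
    by (intro continuous_intros clamp_cont) (auto simp: max_def)
  have \<phi>0: "\<And>x. 0 \<le> \<phi> x" unfolding \<phi>_def using clamp_ge0 by simp
  have \<phi>mid: "\<And>x. a + \<delta> \<le> x \<Longrightarrow> x \<le> 1 - \<delta> \<Longrightarrow> \<phi> x = 1 / x^2"
  proof -
    fix x assume x: "a + \<delta> \<le> x" "x \<le> 1 - \<delta>"
    have "1 \<le> (x - a) / \<delta>" using x d0 by (simp add: field_simps)
    moreover have "1 \<le> (1 - x) / \<delta>" using x d0 by (simp add: field_simps)
    moreover have "max x a = x" using x d0 by simp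
    ultimately show "\<phi> x = 1 / x^2" unfolding \<phi>_def by (simp add: clamp_1)
  qed
  have \<phi>ind: "\<And>x. x \<in> {0..1} \<Longrightarrow> x^2 * \<phi> x \<le> indicator {a<..<1} x"
  proof -
    fix x :: real assume x: "x \<in> {0..1}"
    show "x^2 * \<phi> x \<le> indicator {a<..<1} x"
    proof (cases "x \<in> {a<..<1}")
      case True
      hence mx: "max x a = x" and xp: "0 < x" using a by auto
      have "\<phi> x \<le> 1 / x^2" unfolding \<phi>_def mx using clamp_le1
        by (intro divide_right_mono) (auto simp: min_le_iff_disj)
      hence "x^2 * \<phi> x \<le> x^2 * (1 / x^2)" by (intro mult_left_mono) auto
      thus ?thesis using True xp by simp
    next
      case False
      hence "x \<le> a \<or> 1 \<le> x" by auto
      hence "\<phi> x = 0"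
      proof
        assume "x \<le> a" hence "(x - a) / \<delta> \<le> 0" using d0 by (simp add: divide_nonpos_pos)
        hence "clamp ((x - a) / \<delta>) = 0" by (rule clamp_0)
        thus "\<phi> x = 0" unfolding \<phi>_def using clamp_ge0[of "(1 - x) / \<delta>"] by (simp add: min_def)
      next
        assume "1 \<le> x" hence "(1 - x) / \<delta> \<le> 0" using d0 by (simp add: divide_nonpos_pos)
        hence "clamp ((1 - x) / \<delta>) = 0" by (rule clamp_0)
        thus "\<phi> x = 0" unfolding \<phi>_def using clamp_ge0[of "(x - a) / \<delta>"] by (simp add: min_def)
      qed
      thus ?thesis using False by simp
    qed
  qed
  have eta0: "0 < \<eta>" using e by (simp add: \<eta>_def)
  obtain d c where approx: "\<forall>x\<in>{0..1}. \<bar>\<phi> x - (\<Sum>i\<le>d. c i * x ^ i)\<bar> < \<eta>"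
    using poly_approx[OF cont eta0] by blast
  define q where "q = (\<lambda>i. c i + (if i = 0 then - \<eta> else 0))"
  define g where "g = (\<lambda>x::real. \<Sum>i\<le>d. c i * x ^ i)"
  have Q: "\<And>x. (\<Sum>i\<le>d. q i * x ^ i) = g x - \<eta>" unfolding q_def g_def using sum_shift_const(1) by simp
  have Qs: "(\<Sum>i\<le>d. q i / real (Suc i)) = (\<Sum>i\<le>d. c i / real (Suc i)) - \<eta>" unfolding q_def using sum_shift_const(2) by simp
  have g1: "\<And>x. x \<in> {0..1} \<Longrightarrow> g x - \<eta> \<le> \<phi> x" and g2: "\<And>x. x \<in> {0..1} \<Longrightarrow> \<phi> x - \<eta> \<le> g x"
  proof -
    fix x :: real assume x: "x \<in> {0..1}"
    have "\<bar>\<phi> x - g x\<bar> < \<eta>" using approx x unfolding g_def by blast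
    thus "g x - \<eta> \<le> \<phi> x" by (simp add: abs_less_iff)
  next
    fix x :: real assume x: "x \<in> {0..1}"
    have "\<bar>\<phi> x - g x\<bar> < \<eta>" using approx x unfolding g_def by blast
    thus "\<phi> x - \<eta> \<le> g x" by (simp add: abs_less_iff)
  qed
  have pw: "\<forall>x\<in>{0..1}. x^2 * (\<Sum>i\<le>d. q i * x ^ i) \<le> indicator {a<..<1} x"
  proof
    fix x :: real assume x: "x \<in> {0..1}"
    have "x^2 * (g x - \<eta>) \<le> x^2 * \<phi> x" using g1[OF x] by (intro mult_left_mono) auto
    thus "x^2 * (\<Sum>i\<le>d. q i * x ^ i) \<le> indicator {a<..<1} x" using \<phi>ind[OF x] Q by simp
  qed
  have ig: "(g has_integral (\<Sum>i\<le>d. c i / real (Suc i))) {0..1}" unfolding g_def by (rule poly_has_integral)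
  have int\<phi>: "\<And>u v. 0 \<le> u \<Longrightarrow> v \<le> 1 \<Longrightarrow> \<phi> integrable_on {u..v}"
    by (intro integrable_continuous_real continuous_on_subset[OF cont]) auto
  have "integral {0..1} (\<lambda>x. \<phi> x - \<eta>) \<le> integral {0..1} g"
    using g2 int\<phi>[of 0 1] ig by (intro integral_le) (auto intro!: integrable_diff)
  moreover have "integral {0..1} g = (\<Sum>i\<le>d. c i / real (Suc i))" using ig by (simp add: integral_unique)
  moreover have "integral {0..1} (\<lambda>x. \<phi> x - \<eta>) = integral {0..1} \<phi> - \<eta>"
  proof -
    have "integral {0..1} (\<lambda>x. \<phi> x - \<eta>) = integral {0..1} \<phi> - integral {0..1} (\<lambda>x::real. \<eta>)"
      by (rule integral_diff[OF int\<phi>[of 0 1]]) (auto intro: integrable_const_ivl)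
    thus ?thesis by simp
  qed
  moreover have "integral {0..1} \<phi> = integral {0..a + \<delta>} \<phi> + integral {a + \<delta>..1} \<phi>"
    using Henstock_Kurzweil_Integration.integral_combine[where a=0 and c="a+\<delta>" and b=1 and f=\<phi>] ad int\<phi>[of 0 1] by simp
  moreover have "integral {a + \<delta>..1} \<phi> = integral {a + \<delta>..1 - \<delta>} \<phi> + integral {1 - \<delta>..1} \<phi>"
    using Henstock_Kurzweil_Integration.integral_combine[where a="a+\<delta>" and c="1-\<delta>" and b=1 and f=\<phi>] ad int\<phi>[of "a+\<delta>" 1] by simp
  moreover have "0 \<le> integral {0..a + \<delta>} \<phi>" using \<phi>0 int\<phi>[of 0 "a+\<delta>"] ad by (intro integral_nonneg) auto
  moreover have "0 \<le> integral {1 - \<delta>..1} \<phi>" using \<phi>0 int\<phi>[of "1-\<delta>" 1] ad by (intro integral_nonneg) auto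
  moreover have "integral {a + \<delta>..1 - \<delta>} \<phi> = 1/(a + \<delta>) - 1/(1 - \<delta>)"
  proof -
    have "integral {a + \<delta>..1 - \<delta>} \<phi> = integral {a + \<delta>..1 - \<delta>} (\<lambda>x. 1 / x^2)"
      using \<phi>mid by (intro integral_cong) auto
    also have "\<dots> = 1/(a + \<delta>) - 1/(1 - \<delta>)"
      using inv_sq_has_integral[of "a+\<delta>" "1-\<delta>"] ad a d0 by (simp add: integral_unique)
    finally show ?thesis .
  qed
  ultimately have I: "1/(a + \<delta>) - 1/(1 - \<delta>) - \<eta> \<le> (\<Sum>i\<le>d. c i / real (Suc i))" by linarith
  have b1: "1/a - 1/(a + \<delta>) \<le> \<epsilon> / 16"
  proof -
    have "1/a - 1/(a + \<delta>) = \<delta> / (a * (a + \<delta>))" using a d0 by (simp add: field_simps)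
    also have "\<dots> \<le> \<delta> / (a * a)" using a d0 by (intro divide_left_mono mult_left_mono mult_pos_pos) auto
    also have "\<dots> \<le> (a^2 * \<epsilon> / 16) / (a * a)" using d1 a by (intro divide_right_mono) auto
    also have "\<dots> = \<epsilon> / 16" using a by (simp add: power2_eq_square)
    finally show ?thesis .
  qed
  have b2: "1/(1 - \<delta>) - 1 \<le> \<epsilon> / 8"
  proof -
    have "1/(1 - \<delta>) - 1 = \<delta> / (1 - \<delta>)" using ad by (simp add: field_simps)
    also have "\<dots> \<le> \<delta> / (3/4)" using ad d0 by (intro divide_left_mono) auto
    also have "\<dots> \<le> (\<epsilon>/16) / (3/4)" using d1 by (intro divide_right_mono) auto
    also have "\<dots> \<le> \<epsilon> / 8" using e by simp
    finally show ?thesis .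
  qed
  have "2 * (1/a - 1) - \<epsilon> \<le> 2 * (\<Sum>i\<le>d. q i / real (Suc i))"
  proof -
    define S where "S = (\<Sum>i\<le>d. c i / real (Suc i))"
    define A1 where "A1 = 1 / a"
    define A2 where "A2 = 1 / (a + \<delta>)"
    define A3 where "A3 = 1 / (1 - \<delta>)"
    have I': "A2 - A3 - \<epsilon> / 8 \<le> S" using I unfolding S_def A2_def A3_def \<eta>_def by simp
    have b1': "A1 - A2 \<le> \<epsilon> / 16" using b1 unfolding A1_def A2_def by simp
    have b2': "A3 - 1 \<le> \<epsilon> / 8" using b2 unfolding A3_def by simp
    have "2 * (A1 - 1) - \<epsilon> \<le> 2 * (S - \<epsilon> / 8)" using I' b1' b2' e by (simp add: field_simps)
    thus ?thesis unfolding Qs S_def A1_def \<eta>_def by simp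
  qed
  thus ?thesis using pw by blast
qed

lemma hs_le_ln: "1 \<le> m \<Longrightarrow> hs m \<le> 1 + ln (real m)"
proof (induction m rule: nat_induct_at_least)
  case base then show ?case by (simp add: hs_def)
next
  case (Suc m)
  have m0: "0 < real m" using Suc by simp
  have "ln (1 + (- 1 / real (Suc m))) \<le> - 1 / real (Suc m)"
    by (rule ln_add_one_self_le_self2) (use m0 in \<open>simp add: field_simps\<close>)
  moreover have "1 + (- 1 / real (Suc m)) = real m / real (Suc m)" by (simp add: field_simps)
  moreover have "ln (real m / real (Suc m)) = ln (real m) - ln (real (Suc m))" using m0 by (simp add: ln_div)
  ultimately have "1 / real (Suc m) \<le> ln (real (Suc m)) - ln (real m)" by simp
  thus ?case using Suc.IH hs_Suc[of m] by linarith
qed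

lemma W_tendsto:
  assumes n: "filterlim n at_top sequentially" and B: "\<And>k. real (n k) * mu k \<le> B"
    and mu: "\<And>k. 0 \<le> mu k"
  shows "(\<lambda>k. (mu k + 1 / real (n k)) * hs (n k) ^ D) \<longlonglongrightarrow> 0"
proof -
  define B' where "B' = max B 0"
  have rn: "filterlim (\<lambda>k. real (n k)) at_top sequentially"
    by (rule filterlim_compose[OF filterlim_real_sequentially n])
  have f: "((\<lambda>x::real. (1 + ln x) ^ D / x) \<longlongrightarrow> 0) at_top" by real_asymp
  have g: "(\<lambda>k. (B' + 1) * ((1 + ln (real (n k))) ^ D / real (n k))) \<longlonglongrightarrow> 0"
    using tendsto_mult_right_zero[OF filterlim_compose[OF f rn], of "B' + 1"] by simp
  have ev: "eventually (\<lambda>k. 1 \<le> n k) sequentially"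
    using n by (simp add: filterlim_at_top)
  show ?thesis
  proof (rule tendsto_sandwich[OF _ _ tendsto_const g])
    show "eventually (\<lambda>k. 0 \<le> (mu k + 1 / real (n k)) * hs (n k) ^ D) sequentially"
      using ev
    proof (rule eventually_mono)
      fix k assume "1 \<le> n k"
      thus "0 \<le> (mu k + 1 / real (n k)) * hs (n k) ^ D" using mu[of k] hs_ge1[of "n k"] by simp
    qed
    show "eventually (\<lambda>k. (mu k + 1 / real (n k)) * hs (n k) ^ D \<le> (B' + 1) * ((1 + ln (real (n k))) ^ D / real (n k))) sequentially"
      using ev
    proof (rule eventually_mono)
      fix k assume k: "1 \<le> n k"
      have n0: "0 < real (n k)" using k by simp
      have h1: "1 \<le> hs (n k)" using hs_ge1 k by simp
      have "mu k \<le> B' / real (n k)" using B[of k] n0 by (simp add: field_simps B'_def)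
      hence "mu k + 1 / real (n k) \<le> (B' + 1) / real (n k)" by (simp add: add_divide_distrib)
      moreover have "hs (n k) ^ D \<le> (1 + ln (real (n k))) ^ D"
        using hs_le_ln[OF k] h1 by (intro power_mono) auto
      ultimately have "(mu k + 1 / real (n k)) * hs (n k) ^ D \<le> ((B' + 1) / real (n k)) * (1 + ln (real (n k))) ^ D"
        using h1 mu[of k] n0 by (intro mult_mono) (auto simp: B'_def)
      thus "(mu k + 1 / real (n k)) * hs (n k) ^ D \<le> (B' + 1) * ((1 + ln (real (n k))) ^ D / real (n k))"
        by simp
    qed
  qed
qed

lemma Kc_nonneg: "0 \<le> Kc j"
  unfolding Kc_def Let_def using Acoef_nonneg[of 1] Acoef_nonneg[of "Suc j"] Acoef_nonneg[of "Suc (Suc j)"]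
  by (intro add_nonneg_nonneg mult_nonneg_nonneg) auto

lemma E_sum_fin: assumes "0 \<le> mu" "mu \<le> 1"
  shows "E mu m (\<lambda>b. \<Sum>i\<le>d. f i b) = (\<Sum>i\<le>d. E mu m (f i))"
  unfolding E_sum[OF assms] by (simp add: sum_distrib_left sum.swap[of _ "{..m}"])

lemma poly_moment:
  assumes mu: "0 \<le> mu" "mu \<le> 1" and n: "1 \<le> n"
  shows "\<bar>E mu n (\<lambda>b. (real b / real n)^2 * (\<Sum>i\<le>d. q i * (real b / real n) ^ i))
           - mu * (2 * (\<Sum>i\<le>d. q i / real (Suc i)))\<bar>
         \<le> (\<Sum>i\<le>d. \<bar>q i\<bar> * Kc i) * (mu * (mu + 1 / real n) * hs n ^ (d + 3))"
proof -
  have e1: "E mu n (\<lambda>b. (real b / real n)^2 * (\<Sum>i\<le>d. q i * (real b / real n) ^ i))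
      = (\<Sum>i\<le>d. q i * Mr mu (Suc (Suc i)) n)"
  proof -
    have "E mu n (\<lambda>b. (real b / real n)^2 * (\<Sum>i\<le>d. q i * (real b / real n) ^ i))
        = E mu n (\<lambda>b. \<Sum>i\<le>d. q i * (real b / real n) ^ Suc (Suc i))"
      by (intro E_cong[OF mu]) (simp add: sum_distrib_left algebra_simps power2_eq_square)
    also have "\<dots> = (\<Sum>i\<le>d. E mu n (\<lambda>b. q i * (real b / real n) ^ Suc (Suc i)))"
      by (rule E_sum_fin[OF mu])
    also have "\<dots> = (\<Sum>i\<le>d. q i * Mr mu (Suc (Suc i)) n)"
      unfolding Mr_def by (intro sum.cong refl) (rule E_cmult[OF mu])
    finally show ?thesis .
  qed
  have h1: "1 \<le> hs n" using hs_ge1 n by simp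
  have X0: "0 \<le> mu * (mu + 1 / real n)" using mu by simp
  have "\<bar>(\<Sum>i\<le>d. q i * Mr mu (Suc (Suc i)) n) - mu * (2 * (\<Sum>i\<le>d. q i / real (Suc i)))\<bar>
      = \<bar>\<Sum>i\<le>d. q i * (Mr mu (Suc (Suc i)) n - 2 * mu / real (Suc i))\<bar>"
    by (simp add: sum_distrib_left sum_subtractf algebra_simps)
  also have "\<dots> \<le> (\<Sum>i\<le>d. \<bar>q i * (Mr mu (Suc (Suc i)) n - 2 * mu / real (Suc i))\<bar>)"
    by (rule sum_abs)
  also have "\<dots> \<le> (\<Sum>i\<le>d. \<bar>q i\<bar> * Kc i * (mu * (mu + 1 / real n) * hs n ^ (d + 3)))"
  proof (intro sum_mono)
    fix i assume i: "i \<in> {..d}"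
    have "\<bar>q i * (Mr mu (Suc (Suc i)) n - 2 * mu / real (Suc i))\<bar> = \<bar>q i\<bar> * \<bar>Mr mu (Suc (Suc i)) n - 2 * mu / real (Suc i)\<bar>"
      by (simp add: abs_mult)
    also have "\<dots> \<le> \<bar>q i\<bar> * (Kc i * (mu * (mu + 1 / real n) * hs n ^ Suc (Suc (Suc i))))"
      using Mr_asym[OF mu n, of i] by (intro mult_left_mono) auto
    also have "\<dots> \<le> \<bar>q i\<bar> * (Kc i * (mu * (mu + 1 / real n) * hs n ^ (d + 3)))"
      using i h1 X0 Kc_nonneg[of i]
      by (intro mult_left_mono power_increasing) auto
    finally show "\<bar>q i * (Mr mu (Suc (Suc i)) n - 2 * mu / real (Suc i))\<bar> \<le> \<bar>q i\<bar> * Kc i * (mu * (mu + 1 / real n) * hs n ^ (d + 3))"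
      by (simp add: mult.assoc)
  qed
  also have "\<dots> = (\<Sum>i\<le>d. \<bar>q i\<bar> * Kc i) * (mu * (mu + 1 / real n) * hs n ^ (d + 3))"
    by (simp add: sum_distrib_right)
  finally show ?thesis unfolding e1 .
qed

lemma prob_asym:
  assumes a: "0 < a" "a < 1" and mu: "\<And>k. 0 \<le> mu k" "\<And>k. mu k \<le> 1"
    and n: "filterlim n at_top sequentially" and B: "\<And>k. real (n k) * mu k \<le> B" and e: "0 < \<epsilon>"
  shows "eventually (\<lambda>k. \<bar>E (mu k) (n k) (\<lambda>b. indicator {a<..<1} (real b / real (n k))) - mu k * (2 * (1/a - 1))\<bar> \<le> \<epsilon> * mu k) sequentially"
proof -
  have e2: "0 < \<epsilon> / 2" using e by simp
  obtain dU qU where U1: "\<forall>x\<in>{0..1}. indicator {a<..<1} x \<le> x^2 * (\<Sum>i\<le>dU. qU i * x ^ i)"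
    and U2: "2 * (\<Sum>i\<le>dU. qU i / real (Suc i)) \<le> 2 * (1/a - 1) + \<epsilon> / 2"
    using sandwich_upper[OF a e2] by blast
  obtain dL qL where L1: "\<forall>x\<in>{0..1}. x^2 * (\<Sum>i\<le>dL. qL i * x ^ i) \<le> indicator {a<..<1} x"
    and L2: "2 * (1/a - 1) - \<epsilon> / 2 \<le> 2 * (\<Sum>i\<le>dL. qL i / real (Suc i))"
    using sandwich_lower[OF a e2] by blast
  define CU where "CU = (\<Sum>i\<le>dU. \<bar>qU i\<bar> * Kc i)"
  define CL where "CL = (\<Sum>i\<le>dL. \<bar>qL i\<bar> * Kc i)"
  define WU where "WU = (\<lambda>k. (mu k + 1 / real (n k)) * hs (n k) ^ (dU + 3))"
  define WL where "WL = (\<lambda>k. (mu k + 1 / real (n k)) * hs (n k) ^ (dL + 3))"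
  have tU: "(\<lambda>k. CU * WU k) \<longlonglongrightarrow> 0"
    unfolding WU_def by (rule tendsto_mult_right_zero, rule W_tendsto[OF n B mu(1)])
  have tL: "(\<lambda>k. CL * WL k) \<longlonglongrightarrow> 0"
    unfolding WL_def by (rule tendsto_mult_right_zero, rule W_tendsto[OF n B mu(1)])
  have evU: "eventually (\<lambda>k. CU * WU k < \<epsilon> / 2) sequentially" using order_tendstoD(2)[OF tU e2] .
  have evL: "eventually (\<lambda>k. CL * WL k < \<epsilon> / 2) sequentially" using order_tendstoD(2)[OF tL e2] .
  have ev1: "eventually (\<lambda>k. 1 \<le> n k) sequentially" using n by (simp add: filterlim_at_top)
  show ?thesis
    using evU evL ev1
  proof eventually_elim
    case (elim k)
    define m where "m = n k"
    define M where "M = mu k"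
    define P where "P = E M m (\<lambda>b. indicator {a<..<1} (real b / real m))"
    have m1: "1 \<le> m" using elim by (simp add: m_def)
    have M: "0 \<le> M" "M \<le> 1" using mu by (auto simp: M_def)
    have inI: "\<And>b. b \<le> m \<Longrightarrow> real b / real m \<in> {0..1}" using m1 by auto
    have up1: "P \<le> E M m (\<lambda>b. (real b / real m)^2 * (\<Sum>i\<le>dU. qU i * (real b / real m) ^ i))"
      unfolding P_def using U1 inI by (intro E_mono[OF M]) auto
    have up2: "E M m (\<lambda>b. (real b / real m)^2 * (\<Sum>i\<le>dU. qU i * (real b / real m) ^ i))
        \<le> M * (2 * (\<Sum>i\<le>dU. qU i / real (Suc i))) + CU * (M * (M + 1 / real m) * hs m ^ (dU + 3))"
      using poly_moment[OF M m1, of qU dU] unfolding CU_def by linarith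
    have up3: "CU * (M * (M + 1 / real m) * hs m ^ (dU + 3)) = M * (CU * WU k)"
      by (simp add: WU_def M_def m_def algebra_simps)
    have up4: "M * (CU * WU k) \<le> M * (\<epsilon> / 2)" using elim M by (intro mult_left_mono) auto
    have up5: "M * (2 * (\<Sum>i\<le>dU. qU i / real (Suc i))) \<le> M * (2 * (1/a - 1) + \<epsilon> / 2)"
      using U2 M by (intro mult_left_mono) auto
    have lo1: "E M m (\<lambda>b. (real b / real m)^2 * (\<Sum>i\<le>dL. qL i * (real b / real m) ^ i)) \<le> P"
      unfolding P_def using L1 inI by (intro E_mono[OF M]) auto
    have lo2: "M * (2 * (\<Sum>i\<le>dL. qL i / real (Suc i))) - CL * (M * (M + 1 / real m) * hs m ^ (dL + 3))
        \<le> E M m (\<lambda>b. (real b / real m)^2 * (\<Sum>i\<le>dL. qL i * (real b / real m) ^ i))"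
      using poly_moment[OF M m1, of qL dL] unfolding CL_def by linarith
    have lo3: "CL * (M * (M + 1 / real m) * hs m ^ (dL + 3)) = M * (CL * WL k)"
      by (simp add: WL_def M_def m_def algebra_simps)
    have lo4: "M * (CL * WL k) \<le> M * (\<epsilon> / 2)" using elim M by (intro mult_left_mono) auto
    have lo5: "M * (2 * (1/a - 1) - \<epsilon> / 2) \<le> M * (2 * (\<Sum>i\<le>dL. qL i / real (Suc i)))"
      using L2 M by (intro mult_left_mono) auto
    have "\<bar>P - M * (2 * (1/a - 1))\<bar> \<le> \<epsilon> * M"
      using up1 up2 up3 up4 up5 lo1 lo2 lo3 lo4 lo5 by (simp add: abs_le_iff algebra_simps)
    thus ?case by (simp add: P_def M_def m_def)
  qed
qed

theorem mainTheorem4: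
  fixes n :: "nat \<Rightarrow> nat" and mu :: "nat \<Rightarrow> real" and S :: "nat \<Rightarrow> 'a set"
    and u :: "nat \<Rightarrow> 'a \<Rightarrow> nuc" and a \<theta> \<eta> :: real
  assumes "0 < a" "a < 1"
    and "\<And>k. finite (S k)" "\<And>k. S k \<noteq> {}"
    and "\<And>k. 0 \<le> mu k" "\<And>k. mu k \<le> 1"
    and "filterlim n at_top sequentially"
    and "mu \<longlonglongrightarrow> 0"
    and "0 \<le> \<theta>" "(\<lambda>k. real (n k) * mu k) \<longlonglongrightarrow> \<theta>"
    and "0 \<le> \<eta>" "(\<lambda>k. real (card (S k)) * mu k) \<longlonglongrightarrow> \<eta>"
  shows "(\<lambda>k. expected_sites (n k) (mu k) (S k) (u k) a) \<longlonglongrightarrow> 2 * \<eta> * (1 / a - 1)"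
proof -
  note a = assms(1,2)
  have mu0: "\<And>k. 0 \<le> mu k" and mu1: "\<And>k. mu k \<le> 1" using assms(5,6) by auto
  have nlim: "filterlim n at_top sequentially" using assms(7) .
  obtain K where K: "\<And>k. norm (real (n k) * mu k) \<le> K"
  proof -
    have "Bseq (\<lambda>k. real (n k) * mu k)" by (rule convergent_imp_Bseq[OF convergentI[OF assms(10)]])
    then obtain K0 where "\<forall>k. norm (real (n k) * mu k) \<le> K0" by (rule BseqE)
    thus ?thesis using that by blast
  qed
  have B: "\<And>k. real (n k) * mu k \<le> K" using K by (metis abs_le_D1 real_norm_def)
  define c where "c = 2 * (1/a - 1)"
  define P where "P = (\<lambda>k. E (mu k) (n k) (\<lambda>b. indicator {a<..<1} (real b / real (n k))))"
  define X where "X = (\<lambda>k. real (card (S k)) * mu k)"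
  have Xlim: "X \<longlonglongrightarrow> \<eta>" using assms(12) by (simp add: X_def)
  have ev1: "eventually (\<lambda>k. 1 \<le> n k) sequentially" using nlim by (simp add: filterlim_at_top)
  have ES: "eventually (\<lambda>k. real (card (S k)) * P k = expected_sites (n k) (mu k) (S k) (u k) a) sequentially"
    using ev1 by eventually_elim (simp add: P_def expected_sites_eq[OF assms(3) mu0 mu1])
  have D: "(\<lambda>k. real (card (S k)) * P k - X k * c) \<longlonglongrightarrow> 0"
  proof (rule tendstoI)
    fix e :: real assume e: "0 < e"
    define \<epsilon> where "\<epsilon> = e / (\<eta> + 2)"
    have eps: "0 < \<epsilon>" using e assms(11) by (simp add: \<epsilon>_def)
    have evX: "eventually (\<lambda>k. X k < \<eta> + 1) sequentially" using order_tendstoD(2)[OF Xlim] by simp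
    have evP: "eventually (\<lambda>k. \<bar>P k - mu k * c\<bar> \<le> \<epsilon> * mu k) sequentially"
      using prob_asym[OF a mu0 mu1 nlim B eps] by (simp add: P_def c_def)
    show "eventually (\<lambda>k. dist (real (card (S k)) * P k - X k * c) 0 < e) sequentially"
      using evX evP
    proof eventually_elim
      case (elim k)
      have X0: "0 \<le> X k" using mu0[of k] by (simp add: X_def)
      have "\<bar>real (card (S k)) * P k - X k * c\<bar> = real (card (S k)) * \<bar>P k - mu k * c\<bar>"
      proof -
        have "real (card (S k)) * P k - X k * c = real (card (S k)) * (P k - mu k * c)"
          by (simp add: X_def algebra_simps)
        thus ?thesis by (simp add: abs_mult)
      qed
      also have "\<dots> \<le> real (card (S k)) * (\<epsilon> * mu k)" using elim by (intro mult_left_mono) auto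
      also have "\<dots> = \<epsilon> * X k" by (simp add: X_def)
      also have "\<dots> \<le> \<epsilon> * (\<eta> + 1)" using elim eps by (intro mult_left_mono) auto
      also have "\<dots> < e"
      proof -
        have "\<epsilon> * (\<eta> + 1) < \<epsilon> * (\<eta> + 2)" using eps by simp
        also have "\<epsilon> * (\<eta> + 2) = e" using assms(11) by (simp add: \<epsilon>_def)
        finally show ?thesis .
      qed
      finally show ?case by (simp add: dist_real_def)
    qed
  qed
  have "(\<lambda>k. (real (card (S k)) * P k - X k * c) + X k * c) \<longlonglongrightarrow> 0 + \<eta> * c"
    by (intro tendsto_add D tendsto_mult Xlim tendsto_const)
  hence "(\<lambda>k. real (card (S k)) * P k) \<longlonglongrightarrow> \<eta> * c" by simp
  hence "(\<lambda>k. expected_sites (n k) (mu k) (S k) (u k) a) \<longlonglongrightarrow> \<eta> * c"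
    using ES by (rule Lim_transform_eventually)
  thus ?thesis by (simp add: c_def algebra_simps)
qed

end
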